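(* Let $0\le i\le n-2$. Let $b_{i+1,1},\dots,b_{i+1,r_{i+1}}\in\mathbb{Z}^r$ be linearly independent vectors whose span $L_{i+1}$ contains $W$. For each $j$, writing $b_{i+1,j}=(e_1,\dots,e_r)^T$, put $b'_j=(e_1,\dots,e_r,\sum_{k=1}^r e_kT_i(f_k))^T\in\mathbb{Z}^r\times\mathbb{R}$, and let $P=(0,\dots,0,v^\ell/B_i)^T$. Let $\Lambda$ be the lattice spanned by $b'_1,\dots,b'_{r_{i+1}},P$ (of rank $m=r_{i+1}+1$), let $b_1,\dots,b_m$ be an LLL-reduced basis of $\Lambda$ (parameter $3/4$) with Gram–Schmidt vectors $b_j^*$, and let $r_i$ be the smallest index such that $\|b_j^*\|>r+2$ for all $j>r_i$. Let $b_{i,j}\in\mathbb{Z}^r$ be the projection of $b_j$ onto the first $r$ coordinates ($1\le j\le r_i$), and $L_i=\mathbb{Z}b_{i,1}+\cdots+\mathbb{Z}b_{i,r_i}$. Then: (1) $W\subseteq L_i\subseteq L_{i+1}$; (2) $\|b_{i,j}\|\le (r+2)2^r$ for all $1\le j\le r_i$; (3) if $b_{i,j}=(e_1,\dots,e_r)^T$ then $|T_i(f_1^{e_1}\cdots f_r^{e_r})|\le (r+2)2^r$.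
   Context: Setting: $v$ a prime number, $\mathbb{Z}_v$ the $v$-adic integers; $f\in\mathbb{Z}[X]$ separable of degree $n\ge2$ with leading coefficient $\ell_f$ not divisible by $v$ and $f$ mod $v$ separable; $f=\ell_f f_1\cdots f_r$ with $f_i\in\mathbb{Z}_v[X]$ monic irreducible over $\mathbb{Q}_v$; $f=\ell_f g_1\cdots g_s$ with $g_j\in\mathbb{Q}[X]$ monic irreducible; $g_j=f_1^{w_{j,1}}\cdots f_r^{w_{j,r}}$ with $w_{j,k}\in\{0,1\}$, $w_j=(w_{j,1},\dots,w_{j,r})^T$, $W=\mathbb{Z}w_1+\cdots+\mathbb{Z}w_s\subseteq\mathbb{Z}^r$. For $e\in\mathbb{Z}^r$, $\Phi(f_1^{e_1}\cdots f_r^{e_r}):=\sum_k e_k f f_k'/f_k\in\mathbb{Z}_v[X]$. Fix $\ell>0$. For $c\in\mathbb{Z}_v$, "$c$ mod $v^\ell$" is the unique integer in $(-v^\ell/2,v^\ell/2]$ congruent to $c$ modulo $v^\ell\mathbb{Z}_v$. $M(f)$ is the Mahler measure of $f$ (|leading coefficient| times the product of $|\alpha|^{m_\alpha}$ over complex roots $|\alpha|>1$ with multiplicity $m_\alpha$), and $B_i=\binom{n-1}{i}nM(f)$. For $h=f_1^{e_1}\cdots f_r^{e_r}$, $T'_i(h)\in\mathbb{Z}$ is the coefficient of $X^i$ in $\Phi(h)$ taken mod $v^\ell$, and $T_i(h)=T'_i(h)/B_i$. $\|\cdot\|$ is the Euclidean norm. LLL-reduced with parameter $3/4$: Gram–Schmidt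 coefficients $\mu_{jk}$ satisfy $|\mu_{jk}|\le1/2$ and $\|b_j^*\|^2\ge(3/4-\mu_{j,j-1}^2)\|b_{j-1}^*\|^2$. *)

theory Defs
  imports "HOL-Computational_Algebra.Fraction_Field"
    "Berlekamp_Zassenhaus.Mahler_Measure" "Berlekamp_Zassenhaus.Poly_Mod"
begin

text \<open>A commutative domain 'z is (a copy of) the ring of v-adic integers iff the canonical
  map from 'z to the inverse limit of the rings Z/v^k Z is an isomorphism:
  (i) Z/v^k embeds into 'z/v^k 'z, (ii) every element of 'z is congruent to an integer
  modulo v^k, (iii) 'z is v-adically separated, (iv) 'z is v-adically complete.\<close>

definition is_vadic_integers :: "int \<Rightarrow> 'z::idom itself \<Rightarrow> bool" where
  "is_vadic_integers v _ \<longleftrightarrow>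
     (\<forall>k a. ((of_int (v ^ k) :: 'z) dvd of_int a) \<longleftrightarrow> v ^ k dvd a) \<and>
     (\<forall>(x::'z) k. \<exists>a::int. of_int (v ^ k) dvd (x - of_int a)) \<and>
     (\<forall>(x::'z). (\<forall>k. of_int (v ^ k) dvd x) \<longrightarrow> x = 0) \<and>
     (\<forall>s::nat \<Rightarrow> int. (\<forall>k. v ^ k dvd (s (Suc k) - s k)) \<longrightarrow>
        (\<exists>x::'z. \<forall>k. of_int (v ^ k) dvd (x - of_int (s k))))"

definition rat_to_fract :: "rat \<Rightarrow> 'z::idom fract" where
  "rat_to_fract q = (case quotient_of q of (a, b) \<Rightarrow> Fract (of_int a) (of_int b))"

definition smod_v :: "int \<Rightarrow> nat \<Rightarrow> 'z::idom \<Rightarrow> int" where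
  "smod_v v l c = (THE a::int. - (v ^ l) < 2 * a \<and> 2 * a \<le> v ^ l \<and>
                               (of_int (v ^ l) :: 'z) dvd (c - of_int a))"

definition pquot :: "'z::idom poly \<Rightarrow> 'z poly \<Rightarrow> 'z poly" where
  "pquot F G = (THE q. F = G * q)"

text \<open>Phi(f_1^e_1 ... f_r^e_r) = sum_k e_k f f_k' / f_k  (factors indexed 1..r).\<close>
definition Phi :: "int poly \<Rightarrow> (nat \<Rightarrow> 'z::idom poly) \<Rightarrow> nat \<Rightarrow> (nat \<Rightarrow> int) \<Rightarrow> 'z poly" where
  "Phi f fs r e = (\<Sum>k\<in>{1..r}. smult (of_int (e k))
                      (pquot (map_poly of_int f) (fs k) * pderiv (fs k)))"

definition Bbound :: "int poly \<Rightarrow> nat \<Rightarrow> real" where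
  "Bbound f i = real (degree f - 1 choose i) * real (degree f) * mahler_measure f"

definition Tprime :: "int \<Rightarrow> nat \<Rightarrow> int poly \<Rightarrow> (nat \<Rightarrow> 'z::idom poly) \<Rightarrow> nat \<Rightarrow> nat \<Rightarrow> (nat \<Rightarrow> int) \<Rightarrow> int" where
  "Tprime v l f fs r i e = smod_v v l (coeff (Phi f fs r e) i)"

definition Tval :: "int \<Rightarrow> nat \<Rightarrow> int poly \<Rightarrow> (nat \<Rightarrow> 'z::idom poly) \<Rightarrow> nat \<Rightarrow> nat \<Rightarrow> (nat \<Rightarrow> int) \<Rightarrow> real" where
  "Tval v l f fs r i e = real_of_int (Tprime v l f fs r i e) / Bbound f i"

definition unitv :: "nat \<Rightarrow> nat \<Rightarrow> int" where
  "unitv k = (\<lambda>k'. if k' = k then 1 else 0)"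

section \<open>Vectors (functions nat => real, coordinates 1..D, zero elsewhere), lattices, Gram--Schmidt, LLL\<close>

definition ipr :: "nat \<Rightarrow> (nat \<Rightarrow> real) \<Rightarrow> (nat \<Rightarrow> real) \<Rightarrow> real" where
  "ipr D x y = (\<Sum>k\<in>{1..D}. x k * y k)"

definition vnorm :: "nat \<Rightarrow> (nat \<Rightarrow> real) \<Rightarrow> real" where
  "vnorm D x = sqrt (ipr D x x)"

definition zspan :: "nat set \<Rightarrow> (nat \<Rightarrow> nat \<Rightarrow> real) \<Rightarrow> (nat \<Rightarrow> real) set" where
  "zspan J u = {x. \<exists>c::nat \<Rightarrow> int. x = (\<lambda>k. \<Sum>j\<in>J. real_of_int (c j) * u j k)}"

definition lin_indep :: "nat \<Rightarrow> nat set \<Rightarrow> (nat \<Rightarrow> nat \<Rightarrow> real) \<Rightarrow> bool" where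
  "lin_indep D J u \<longleftrightarrow> (\<forall>c::nat \<Rightarrow> real.
      (\<forall>k\<in>{1..D}. (\<Sum>j\<in>J. c j * u j k) = 0) \<longrightarrow> (\<forall>j\<in>J. c j = 0))"

function gso :: "nat \<Rightarrow> (nat \<Rightarrow> nat \<Rightarrow> real) \<Rightarrow> nat \<Rightarrow> nat \<Rightarrow> real" where
  "gso D b j = (\<lambda>k. b j k - (\<Sum>i\<in>{1..<j}.
       (ipr D (b j) (gso D b i) / ipr D (gso D b i) (gso D b i)) * gso D b i k))"
  by auto
termination by (relation "measure (\<lambda>(D, b, j). j)") auto

definition gs_mu :: "nat \<Rightarrow> (nat \<Rightarrow> nat \<Rightarrow> real) \<Rightarrow> nat \<Rightarrow> nat \<Rightarrow> real" where
  "gs_mu D b j i = ipr D (b j) (gso D b i) / ipr D (gso D b i) (gso D b i)"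

definition lll_reduced :: "nat \<Rightarrow> nat \<Rightarrow> (nat \<Rightarrow> nat \<Rightarrow> real) \<Rightarrow> bool" where
  "lll_reduced D m b \<longleftrightarrow>
     (\<forall>j\<in>{1..m}. \<forall>i\<in>{1..<j}. \<bar>gs_mu D b j i\<bar> \<le> 1/2) \<and>
     (\<forall>j\<in>{2..m}. (vnorm D (gso D b j))\<^sup>2 \<ge>
        (3/4 - (gs_mu D b j (j - 1))\<^sup>2) * (vnorm D (gso D b (j - 1)))\<^sup>2)"

end

theory Submission
  imports Defs "Berlekamp_Zassenhaus.Factor_Bound"
begin


declare gso.simps[simp del]

lemma gso_eq: "gso D b j k = b j k - (\<Sum>i\<in>{1..<j}. gs_mu D b j i * gso D b i k)"
  by (subst gso.simps) (simp add: gs_mu_def)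

lemma ipr_sym: "ipr D x y = ipr D y x"
  unfolding ipr_def by (simp add: mult.commute)

lemma ipr_nonneg: "ipr D x x \<ge> 0"
  unfolding ipr_def by (auto intro: sum_nonneg)

lemma ipr_zero: "ipr D x x = 0 \<Longrightarrow> k \<in> {1..D} \<Longrightarrow> x k = 0"
  unfolding ipr_def
  by (subst (asm) sum_nonneg_eq_0_iff) auto

lemma ipr_zero_left: "(\<And>k. k \<in> {1..D} \<Longrightarrow> x k = 0) \<Longrightarrow> ipr D x y = 0"
  unfolding ipr_def by simp

lemma ipr_sum_left: "finite I \<Longrightarrow> ipr D (\<lambda>k. \<Sum>i\<in>I. c i * u i k) y = (\<Sum>i\<in>I. c i * ipr D (u i) y)"
  unfolding ipr_def by (simp add: sum_distrib_left sum_distrib_right mult_ac sum.swap[of _ I])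

lemma ipr_diff_left: "ipr D (\<lambda>k. x k - z k) y = ipr D x y - ipr D z y"
  unfolding ipr_def by (simp add: algebra_simps sum_subtractf)

lemma vnorm_sq: "(vnorm D x)\<^sup>2 = ipr D x x"
  unfolding vnorm_def using ipr_nonneg by simp

lemma cauchy_schwarz_ipr: "(ipr D x y)\<^sup>2 \<le> ipr D x x * ipr D y y"
proof (cases "ipr D y y = 0")
  case True
  then have "\<forall>k\<in>{1..D}. y k = 0" using ipr_zero by blast
  then have "ipr D x y = 0" unfolding ipr_def by simp
  then show ?thesis using True by simp
next
  case False
  define a where "a = ipr D y y"
  define c where "c = ipr D x y"
  have apos: "a > 0" using False ipr_nonneg[of D y] a_def by linarith
  have "0 \<le> (\<Sum>k\<in>{1..D}. (a * x k - c * y k)\<^sup>2)" by (auto intro: sum_nonneg)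
  also have "\<dots> = (\<Sum>k\<in>{1..D}. a\<^sup>2 * (x k * x k) - 2 * a * c * (x k * y k) + c\<^sup>2 * (y k * y k))"
    by (rule sum.cong) (auto simp: power2_eq_square algebra_simps)
  also have "\<dots> = a\<^sup>2 * ipr D x x - 2 * a * c * ipr D x y + c\<^sup>2 * ipr D y y"
    unfolding ipr_def by (simp add: sum.distrib sum_subtractf sum_distrib_left)
  also have "\<dots> = a\<^sup>2 * ipr D x x - 2 * a * c * c + c\<^sup>2 * a"
    unfolding a_def c_def by simp
  also have "\<dots> = a * (a * ipr D x x - c\<^sup>2)" by (simp add: power2_eq_square algebra_simps)
  finally have "0 \<le> a * ipr D x x - c\<^sup>2" using apos by (simp add: zero_le_mult_iff)
  then show ?thesis unfolding a_def c_def by (simp add: mult.commute)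
qed

lemma gso_orth: "i \<in> {1..<j} \<Longrightarrow> ipr D (gso D b j) (gso D b i) = 0"
proof (induction j arbitrary: i rule: less_induct)
  case (less j)
  have orth: "ipr D (gso D b t) (gso D b i) = 0" if "t \<in> {1..<j}" "t \<noteq> i" for t
  proof (cases "t < i")
    case True
    then show ?thesis using less.IH[of i t] that less.prems by (subst ipr_sym) auto
  next
    case False
    then show ?thesis using less.IH[of t i] that less.prems by auto
  qed
  have "ipr D (gso D b j) (gso D b i) =
     ipr D (b j) (gso D b i) - (\<Sum>t\<in>{1..<j}. gs_mu D b j t * ipr D (gso D b t) (gso D b i))"
    by (subst gso_eq[abs_def], subst ipr_diff_left, subst ipr_sum_left) auto
  also have "(\<Sum>t\<in>{1..<j}. gs_mu D b j t * ipr D (gso D b t) (gso D b i))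
      = gs_mu D b j i * ipr D (gso D b i) (gso D b i)"
    using less.prems by (subst sum.remove[of _ i]) (auto simp: orth)
  also have "ipr D (b j) (gso D b i) - gs_mu D b j i * ipr D (gso D b i) (gso D b i) = 0"
  proof (cases "ipr D (gso D b i) (gso D b i) = 0")
    case True
    then have "\<forall>k\<in>{1..D}. gso D b i k = 0" using ipr_zero by blast
    then have "ipr D (b j) (gso D b i) = 0" unfolding ipr_def by simp
    then show ?thesis using True by simp
  next
    case False
    then show ?thesis by (simp add: gs_mu_def)
  qed
  finally show ?case .
qed

lemma gso_orth': "ipr D (gso D b j) (gso D b i) = 0" if "i \<noteq> j" "i \<ge> 1" "j \<ge> 1"
proof (cases "i < j")
  case True
  then show ?thesis using gso_orth[of i j D b] that by auto
next
  case False
  then have "ipr D (gso D b i) (gso D b j) = 0" using gso_orth[of j i D b] that by auto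
  then show ?thesis by (simp add: ipr_sym)
qed

lemma b_as_gso: "b j k = (\<Sum>t\<in>{1..j}. (if t = j then 1 else gs_mu D b j t) * gso D b t k)" if "j \<ge> 1"
proof -
  have "{1..j} = insert j {1..<j}" using that by auto
  then show ?thesis using gso_eq[of D b j k] by (simp add: sum.cong[of "{1..<j}" _ _ "\<lambda>t. gs_mu D b j t * gso D b t k"])
qed

definition gA :: "nat \<Rightarrow> (nat \<Rightarrow> nat \<Rightarrow> real) \<Rightarrow> nat \<Rightarrow> nat \<Rightarrow> real" where
  "gA D b j t = (if t = j then 1 else gs_mu D b j t)"

lemma b_as_gso_fun: "j \<ge> 1 \<Longrightarrow> b j = (\<lambda>k. \<Sum>t\<in>{1..j}. gA D b j t * gso D b t k)"
  by (rule ext) (simp add: b_as_gso[of j b _ D] gA_def)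

lemma ipr_b_gso: assumes "j \<ge> 1" "t \<ge> 1"
  shows "ipr D (b j) (gso D b t) = (if t \<le> j then gA D b j t * ipr D (gso D b t) (gso D b t) else 0)"
proof -
  have "ipr D (b j) (gso D b t) = (\<Sum>s\<in>{1..j}. gA D b j s * ipr D (gso D b s) (gso D b t))"
    by (subst b_as_gso_fun[OF assms(1)], subst ipr_sum_left) auto
  also have "\<dots> = (\<Sum>s\<in>{1..j}. if s = t then gA D b j s * ipr D (gso D b s) (gso D b t) else 0)"
    by (rule sum.cong) (use assms in \<open>auto simp: gso_orth'\<close>)
  also have "\<dots> = (if t \<le> j then gA D b j t * ipr D (gso D b t) (gso D b t) else 0)"
    using assms by (simp add: sum.delta)
  finally show ?thesis .
qed

lemma ipr_b_b: assumes "j \<ge> 1"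
  shows "ipr D (b j) (b j) = (\<Sum>t\<in>{1..j}. (gA D b j t)\<^sup>2 * ipr D (gso D b t) (gso D b t))"
proof -
  have "ipr D (b j) (b j) = ipr D (b j) (\<lambda>k. \<Sum>t\<in>{1..j}. gA D b j t * gso D b t k)"
    using b_as_gso_fun[OF assms, of b D] by simp
  also have "\<dots> = (\<Sum>t\<in>{1..j}. gA D b j t * ipr D (gso D b t) (b j))"
    by (subst ipr_sym, subst ipr_sum_left) auto
  also have "\<dots> = (\<Sum>t\<in>{1..j}. (gA D b j t)\<^sup>2 * ipr D (gso D b t) (gso D b t))"
  proof (rule sum.cong)
    fix t assume t: "t \<in> {1..j}"
    have "ipr D (gso D b t) (b j) = ipr D (b j) (gso D b t)" by (rule ipr_sym)
    also have "\<dots> = gA D b j t * ipr D (gso D b t) (gso D b t)" using t assms by (simp add: ipr_b_gso)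
    finally show "gA D b j t * ipr D (gso D b t) (b j) = (gA D b j t)\<^sup>2 * ipr D (gso D b t) (gso D b t)"
      by (simp add: power2_eq_square)
  qed simp
  finally show ?thesis .
qed

lemma short_in_span:
  fixes c :: "nat \<Rightarrow> int"
  assumes y: "y = (\<lambda>k. \<Sum>j\<in>{1..m}. real_of_int (c j) * b j k)"
    and big: "\<forall>j. t < j \<and> j \<le> m \<longrightarrow> vnorm D (gso D b j) > R"
    and R: "R \<ge> 0" and yR: "vnorm D y \<le> R"
  shows "\<forall>j\<in>{1..m}. t < j \<longrightarrow> c j = 0"
proof (rule ccontr)
  assume "\<not> ?thesis"
  then obtain j0 where j0: "j0 \<in> {1..m}" "t < j0" "c j0 \<noteq> 0" by auto
  define S where "S = {j\<in>{1..m}. c j \<noteq> 0}"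
  have finS: "finite S" "S \<noteq> {}" using j0 unfolding S_def by auto
  define k where "k = Max S"
  have kS: "k \<in> S" using finS unfolding k_def by (rule Max_in)
  have kge: "j0 \<le> k" using j0 finS unfolding k_def S_def by (intro Max_ge) auto
  have above: "c j = 0" if "j \<in> {1..m}" "k < j" for j
    using that finS Max_ge[of S j] unfolding k_def S_def by fastforce
  have k1: "k \<ge> 1" "k \<le> m" "c k \<noteq> 0" using kS unfolding S_def by auto
  define G where "G = ipr D (gso D b k) (gso D b k)"
  have "vnorm D (gso D b k) > R" using big kge j0 k1 by auto
  then have "(vnorm D (gso D b k))\<^sup>2 > R\<^sup>2" using R by (intro power_strict_mono) auto
  then have GR: "G > R\<^sup>2" unfolding G_def vnorm_sq .
  have "(vnorm D y)\<^sup>2 \<le> R\<^sup>2" using yR by (intro power_mono) (auto simp: vnorm_def ipr_nonneg)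
  then have YR: "ipr D y y \<le> R\<^sup>2" unfolding vnorm_sq .
  have "ipr D y (gso D b k) = (\<Sum>j\<in>{1..m}. real_of_int (c j) * ipr D (b j) (gso D b k))"
    unfolding y by (subst ipr_sum_left) auto
  also have "\<dots> = (\<Sum>j\<in>{1..m}. if j = k then real_of_int (c k) * G else 0)"
    by (rule sum.cong) (use k1 above in \<open>auto simp: ipr_b_gso G_def gA_def\<close>)
  also have "\<dots> = real_of_int (c k) * G" using k1 by simp
  finally have e: "ipr D y (gso D b k) = real_of_int (c k) * G" .
  have "(real_of_int (c k) * G)\<^sup>2 \<le> ipr D y y * G"
    using cauchy_schwarz_ipr[of D y "gso D b k"] unfolding e G_def .
  then have "(real_of_int (c k))\<^sup>2 * G * G \<le> ipr D y y * G" by (simp add: power2_eq_square mult_ac)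
  moreover have "G > 0" using GR zero_le_power2[of R] by linarith
  ultimately have "(real_of_int (c k))\<^sup>2 * G \<le> ipr D y y" by simp
  also have "\<dots> < G" using YR GR by simp
  finally have "(real_of_int (c k))\<^sup>2 < 1" using \<open>G > 0\<close> by simp
  then have "real_of_int ((c k)\<^sup>2) < 1" by simp
  then have "(c k)\<^sup>2 < 1" by linarith
  moreover have "(c k)\<^sup>2 \<ge> 0" by simp
  ultimately have "(c k)\<^sup>2 = 0" by linarith
  then have "c k = 0" by simp
  then show False using k1 by simp
qed

lemma lll_step: assumes "lll_reduced D m b" "2 \<le> j" "j \<le> m"
  shows "ipr D (gso D b (j - 1)) (gso D b (j - 1)) \<le> 2 * ipr D (gso D b j) (gso D b j)"
proof -
  have mu: "\<bar>gs_mu D b j (j - 1)\<bar> \<le> 1/2" using assms unfolding lll_reduced_def by auto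
  have "(gs_mu D b j (j - 1))\<^sup>2 \<le> 1/4"
  proof -
    have "(gs_mu D b j (j - 1))\<^sup>2 \<le> (1/2)\<^sup>2" using mu by (metis abs_ge_zero power2_abs power_mono)
    then show ?thesis by (simp add: power2_eq_square)
  qed
  moreover have "(vnorm D (gso D b j))\<^sup>2 \<ge> (3/4 - (gs_mu D b j (j - 1))\<^sup>2) * (vnorm D (gso D b (j - 1)))\<^sup>2"
    using assms unfolding lll_reduced_def by auto
  moreover have "(1/2) * (vnorm D (gso D b (j - 1)))\<^sup>2 \<le> (3/4 - (gs_mu D b j (j - 1))\<^sup>2) * (vnorm D (gso D b (j - 1)))\<^sup>2"
    using calculation by (intro mult_right_mono) auto
  ultimately have "(vnorm D (gso D b j))\<^sup>2 \<ge> (1/2) * (vnorm D (gso D b (j - 1)))\<^sup>2"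
    by linarith
  then show ?thesis unfolding vnorm_sq by simp
qed

lemma lll_chain: assumes "lll_reduced D m b" "1 \<le> k" "k \<le> t" "t \<le> m"
  shows "ipr D (gso D b k) (gso D b k) \<le> 2 ^ (t - k) * ipr D (gso D b t) (gso D b t)"
  using assms(3,4)
proof (induction t rule: dec_induct)
  case base
  then show ?case by simp
next
  case (step t)
  have "ipr D (gso D b k) (gso D b k) \<le> 2 ^ (t - k) * ipr D (gso D b t) (gso D b t)"
    using step by simp
  also have "\<dots> \<le> 2 ^ (t - k) * (2 * ipr D (gso D b (Suc t)) (gso D b (Suc t)))"
    using lll_step[OF assms(1), of "Suc t"] step assms(2) by (intro mult_left_mono) auto
  also have "\<dots> = 2 ^ (Suc t - k) * ipr D (gso D b (Suc t)) (gso D b (Suc t))"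
    using step by (simp add: Suc_diff_le)
  finally show ?case .
qed

lemma lll_b_bound: assumes "lll_reduced D m b" "1 \<le> j" "j \<le> t" "t \<le> m"
  and gt: "ipr D (gso D b t) (gso D b t) \<le> Q"
  shows "ipr D (b j) (b j) \<le> (1 + real (j - 1) / 4) * 2 ^ (t - 1) * Q"
proof -
  have Q0: "Q \<ge> 0" using gt ipr_nonneg[of D "gso D b t"] by linarith
  have gs: "ipr D (gso D b s) (gso D b s) \<le> 2 ^ (t - 1) * Q" if "1 \<le> s" "s \<le> j" for s
  proof -
    have "ipr D (gso D b s) (gso D b s) \<le> 2 ^ (t - s) * ipr D (gso D b t) (gso D b t)"
      using lll_chain[OF assms(1), of s t] that assms by auto
    also have "\<dots> \<le> 2 ^ (t - s) * Q" using gt by (intro mult_left_mono) auto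
    also have "\<dots> \<le> 2 ^ (t - 1) * Q" using that Q0 by (intro mult_right_mono power_increasing) auto
    finally show ?thesis .
  qed
  have A: "(gA D b j s)\<^sup>2 \<le> (if s = j then 1 else 1/4)" if "s \<in> {1..j}" for s
  proof (cases "s = j")
    case False
    then have "\<bar>gs_mu D b j s\<bar> \<le> 1/2" using assms that unfolding lll_reduced_def by auto
    then have "(gs_mu D b j s)\<^sup>2 \<le> (1/2)\<^sup>2" by (metis abs_ge_zero power2_abs power_mono)
    then show ?thesis using False unfolding gA_def by (simp add: power2_eq_square)
  qed (simp add: gA_def)
  have "ipr D (b j) (b j) = (\<Sum>s\<in>{1..j}. (gA D b j s)\<^sup>2 * ipr D (gso D b s) (gso D b s))"
    using ipr_b_b assms by auto
  also have "\<dots> \<le> (\<Sum>s\<in>{1..j}. (if s = j then 1 else 1/4) * (2 ^ (t - 1) * Q))"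
    by (rule sum_mono, rule mult_mono) (use A gs ipr_nonneg in auto)
  also have "\<dots> = (\<Sum>s\<in>insert j {1..<j}. (if s = j then 1 else 1/4) * (2 ^ (t - 1) * Q))"
    using assms by (intro sum.cong) auto
  also have "\<dots> = (2 ^ (t - 1) * Q) + real (j - 1) * (1/4 * (2 ^ (t - 1) * Q))"
    by (subst sum.insert) auto
  also have "\<dots> = (1 + real (j - 1) / 4) * 2 ^ (t - 1) * Q" by (simp add: algebra_simps)
  finally show ?thesis .
qed

lemma lin_dep_big:
  fixes u :: "nat \<Rightarrow> nat \<Rightarrow> real"
  assumes "finite J" "card J > D"
  shows "\<exists>c. (\<forall>k\<in>{1..D}. (\<Sum>j\<in>J. c j * u j k) = 0) \<and> (\<exists>j\<in>J. c j \<noteq> 0)"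
  using assms
proof (induction D arbitrary: J u)
  case 0
  then obtain j0 where "j0 \<in> J" by fastforce
  then show ?case by (intro exI[of _ "\<lambda>j. if j = j0 then 1 else 0"]) auto
next
  case (Suc D)
  show ?case
  proof (cases "\<forall>j\<in>J. u j (Suc D) = 0")
    case True
    from Suc.IH[of J u] Suc.prems obtain c where
      c: "\<forall>k\<in>{1..D}. (\<Sum>j\<in>J. c j * u j k) = 0" "\<exists>j\<in>J. c j \<noteq> 0" by auto
    have "\<forall>k\<in>{1..Suc D}. (\<Sum>j\<in>J. c j * u j k) = 0"
    proof
      fix k assume k: "k \<in> {1..Suc D}"
      show "(\<Sum>j\<in>J. c j * u j k) = 0"
      proof (cases "k = Suc D")
        case True
        then show ?thesis using \<open>\<forall>j\<in>J. u j (Suc D) = 0\<close> by simp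
      next
        case False
        then show ?thesis using c k by auto
      qed
    qed
    then show ?thesis using c by blast
  next
    case False
    then obtain j0 where j0: "j0 \<in> J" "u j0 (Suc D) \<noteq> 0" by auto
    define J' where "J' = J - {j0}"
    define u' where "u' = (\<lambda>j k. u j k - (u j (Suc D) / u j0 (Suc D)) * u j0 k)"
    have finJ': "finite J'" "card J' > D" using Suc.prems j0 unfolding J'_def by auto
    from Suc.IH[OF finJ', of u'] obtain c' where
      c': "\<forall>k\<in>{1..D}. (\<Sum>j\<in>J'. c' j * u' j k) = 0" "\<exists>j\<in>J'. c' j \<noteq> 0" by auto
    define a where "a = - (\<Sum>j\<in>J'. c' j * (u j (Suc D) / u j0 (Suc D)))"
    define c where "c = (\<lambda>j. if j = j0 then a else c' j)"
    have J: "J = insert j0 J'" "j0 \<notin> J'" using j0 unfolding J'_def by auto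
    have key: "(\<Sum>j\<in>J. c j * u j k) = (\<Sum>j\<in>J'. c' j * u' j k)" for k
    proof -
      have "(\<Sum>j\<in>J. c j * u j k) = a * u j0 k + (\<Sum>j\<in>J'. c' j * u j k)"
        using J finJ' unfolding c_def by (simp add: sum.insert) (intro sum.cong, auto)
      also have "\<dots> = (\<Sum>j\<in>J'. c' j * u' j k)"
        unfolding u'_def a_def
        by (simp add: algebra_simps sum_subtractf sum_distrib_left sum_distrib_right)
      finally show ?thesis .
    qed
    have "\<forall>k\<in>{1..Suc D}. (\<Sum>j\<in>J. c j * u j k) = 0"
    proof
      fix k assume k: "k \<in> {1..Suc D}"
      show "(\<Sum>j\<in>J. c j * u j k) = 0"
      proof (cases "k = Suc D")
        case True
        have "\<forall>j. u' j (Suc D) = 0" unfolding u'_def using j0 by simp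
        then show ?thesis unfolding key True by simp
      next
        case False
        then show ?thesis unfolding key using c' k by auto
      qed
    qed
    moreover have "\<exists>j\<in>J. c j \<noteq> 0" using c' J unfolding c_def by auto
    ultimately show ?thesis by blast
  qed
qed

lemma lin_indep_card: assumes "lin_indep D J u" "finite J" shows "card J \<le> D"
proof (rule ccontr)
  assume "\<not> card J \<le> D"
  then obtain c where "\<forall>k\<in>{1..D}. (\<Sum>j\<in>J. c j * u j k) = 0" "\<exists>j\<in>J. c j \<noteq> 0"
    using lin_dep_big[OF assms(2), of D u] by auto
  then show False using assms(1) unfolding lin_indep_def by blast
qed

lemma zspan_gen: assumes "finite J" "j \<in> J" shows "u j \<in> zspan J u"
  unfolding zspan_def
proof (intro CollectI exI[of _ "\<lambda>i. if i = j then 1 else 0"] ext)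
  fix k show "u j k = (\<Sum>i\<in>J. real_of_int (if i = j then 1 else 0) * u i k)"
  proof -
    have "(\<Sum>i\<in>J. real_of_int (if i = j then 1 else 0) * u i k) = (\<Sum>i\<in>J. if i = j then u j k else 0)"
      by (rule sum.cong) auto
    then show ?thesis using assms by simp
  qed
qed

lemma zspan_comb:
  fixes d :: "nat \<Rightarrow> int"
  assumes "finite I" "finite J" "\<forall>i\<in>I. x i \<in> zspan J u"
  shows "(\<lambda>k. \<Sum>i\<in>I. real_of_int (d i) * x i k) \<in> zspan J u"
proof -
  from assms(3) have "\<forall>i\<in>I. \<exists>c::nat\<Rightarrow>int. x i = (\<lambda>k. \<Sum>j\<in>J. real_of_int (c j) * u j k)"
    unfolding zspan_def by auto
  then obtain C where C: "\<forall>i\<in>I. x i = (\<lambda>k. \<Sum>j\<in>J. real_of_int (C i j) * u j k)"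
    by metis
  have "(\<lambda>k. \<Sum>i\<in>I. real_of_int (d i) * x i k) =
        (\<lambda>k. \<Sum>j\<in>J. real_of_int (\<Sum>i\<in>I. d i * C i j) * u j k)"
  proof (rule ext)
    fix k
    have "(\<Sum>i\<in>I. real_of_int (d i) * x i k) =
          (\<Sum>i\<in>I. real_of_int (d i) * (\<Sum>j\<in>J. real_of_int (C i j) * u j k))"
      using C by (intro sum.cong) auto
    also have "\<dots> = (\<Sum>j\<in>J. real_of_int (\<Sum>i\<in>I. d i * C i j) * u j k)"
      by (simp add: sum_distrib_left sum_distrib_right mult_ac sum.swap[of _ I])
    finally show "(\<Sum>i\<in>I. real_of_int (d i) * x i k) =
          (\<Sum>j\<in>J. real_of_int (\<Sum>i\<in>I. d i * C i j) * u j k)" .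
  qed
  then show ?thesis unfolding zspan_def mem_Collect_eq by (rule exI[of _ "\<lambda>j. \<Sum>i\<in>I. d i * C i j"])
qed

lemma zspan_subset:
  assumes "finite I" "finite J" "\<forall>i\<in>I. x i \<in> zspan J u"
  shows "zspan I x \<subseteq> zspan J u"
proof
  fix y assume "y \<in> zspan I x"
  then obtain d :: "nat \<Rightarrow> int" where "y = (\<lambda>k. \<Sum>i\<in>I. real_of_int (d i) * x i k)"
    unfolding zspan_def by auto
  then show "y \<in> zspan J u" using zspan_comb[OF assms] by simp
qed



lemma mignotte_complex: "cmod (coeff h i) \<le> real (degree h choose i) * mahler_measure_poly h"
proof (cases "i \<le> degree h")
  case False
  then have "coeff h i = 0" by (simp add: coeff_eq_0)
  moreover have "mahler_measure_poly h \<ge> 0"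
    unfolding mahler_measure_poly_via_monic using mahler_measure_monic_ge_0 by simp
  ultimately show ?thesis by simp
next
  case True
  have lc: "cmod (lead_coeff h) \<le> mahler_measure_poly h"
    unfolding mahler_measure_poly_via_monic
    using mahler_measure_monic_ge_1[of h] by (simp add: mult_le_cancel_left1)
  have M0: "mahler_measure_poly h \<ge> 0"
    unfolding mahler_measure_poly_via_monic using mahler_measure_monic_ge_0 by simp
  have "cmod (coeff h i) \<le> (degree h - 1 choose i) * mahler_measure_poly h
      + min i 1 * (degree h - 1 choose (i - 1)) * cmod (lead_coeff h)"
    by (rule mignotte_helper_coeff)
  also have "\<dots> \<le> (degree h - 1 choose i) * mahler_measure_poly h
      + min i 1 * (degree h - 1 choose (i - 1)) * mahler_measure_poly h"
    using lc by (intro add_left_mono mult_left_mono) auto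
  also have "\<dots> = real ((degree h - 1 choose i) + min i 1 * (degree h - 1 choose (i - 1))) * mahler_measure_poly h"
    by (simp add: algebra_simps)
  also have "(degree h - 1 choose i) + min i 1 * (degree h - 1 choose (i - 1)) = degree h choose i"
  proof (cases "i = 0")
    case False
    then obtain ii where i: "i = Suc ii" by (cases i) auto
    with True obtain dd where d: "degree h = Suc dd" by (cases "degree h") auto
    show ?thesis unfolding i d by auto
  qed auto
  finally show ?thesis .
qed

lemma linprod_props: "(\<Prod>a\<leftarrow>as. [:- a, 1:]) \<noteq> (0 :: complex poly) \<and> degree (\<Prod>a\<leftarrow>as. [:- a, 1:] :: complex poly) = length as"
proof (induction as)
  case (Cons a as)
  have l: "[:- a, 1:] \<noteq> (0 :: complex poly)" "degree [:- a, 1:] = 1" by auto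
  have "(\<Prod>a\<leftarrow>a # as. [:- a, 1:]) = [:- a, 1:] * (\<Prod>a\<leftarrow>as. [:- a, 1:] :: complex poly)" by simp
  moreover have "[:- a, 1:] * (\<Prod>a\<leftarrow>as. [:- a, 1:] :: complex poly) \<noteq> 0"
    using l Cons by (simp only: mult_eq_0_iff) auto
  moreover have "degree ([:- a, 1:] * (\<Prod>a\<leftarrow>as. [:- a, 1:] :: complex poly)) = Suc (length as)"
    using degree_mult_eq[OF l(1), of "\<Prod>a\<leftarrow>as. [:- a, 1:]"] l Cons by simp
  ultimately show ?case by (metis length_Cons)
qed simp

lemma mahler_lin_ge: "mahler_measure_poly (K :: complex poly) \<le> mahler_measure_poly (K * [:- a, 1:])"
proof -
  have m: "mahler_measure_poly [:- a, 1:] = max 1 (cmod a)" by simp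
  have "mahler_measure_poly (K * [:- a, 1:]) = mahler_measure_poly K * max 1 (cmod a)"
    by (simp only: measure_eq_prod m)
  moreover have "mahler_measure_poly K \<ge> 0"
    unfolding mahler_measure_poly_via_monic using mahler_measure_monic_ge_0 by simp
  ultimately show ?thesis by (simp add: mult_le_cancel_left1)
qed

lemma pderiv_linprod_bound:
  fixes K :: "complex poly"
  assumes "K \<noteq> 0"
  shows "cmod (coeff (K * pderiv (\<Prod>a\<leftarrow>as. [:- a, 1:])) i) \<le>
    real (length as) * real ((degree K + length as - 1) choose i) * mahler_measure_poly (K * (\<Prod>a\<leftarrow>as. [:- a, 1:]))"
  using assms
proof (induction as arbitrary: K)
  case Nil
  then show ?case by simp
next
  case (Cons a as)
  define L where "L = (\<Prod>a\<leftarrow>as. [:- a, 1:] :: complex poly)"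
  have L: "L \<noteq> 0" "degree L = length as" using linprod_props[of as] unfolding L_def by auto
  have lin: "[:- a, 1:] \<noteq> (0 :: complex poly)" "degree [:- a, 1:] = 1" "pderiv [:- a, 1:] = (1 :: complex poly)"
    by (auto simp: pderiv_pCons)
  have K'1: "K * [:- a, 1:] \<noteq> 0"
    using Cons.prems lin by (simp only: mult_eq_0_iff) auto
  have K'2: "degree (K * [:- a, 1:]) = degree K + 1"
    using degree_mult_eq[OF Cons.prems lin(1)] lin(2) by simp
  note K' = K'1 K'2
  have eq: "K * pderiv (\<Prod>a\<leftarrow>a # as. [:- a, 1:]) = K * L + (K * [:- a, 1:]) * pderiv L"
  proof -
    have "pderiv (\<Prod>a\<leftarrow>a # as. [:- a, 1:]) = [:- a, 1:] * pderiv L + L * 1"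
      unfolding L_def by (simp only: list.map prod_list.Cons pderiv_mult lin(3))
    then have "K * pderiv (\<Prod>a\<leftarrow>a # as. [:- a, 1:]) = K * ([:- a, 1:] * pderiv L) + K * L"
      by (simp only: distrib_left mult_1_right)
    also have "\<dots> = K * L + (K * [:- a, 1:]) * pderiv L"
      by (simp only: mult.assoc add.commute)
    finally show ?thesis .
  qed
  have P: "K * (\<Prod>a\<leftarrow>a # as. [:- a, 1:]) = (K * L) * [:- a, 1:]"
    unfolding L_def by (simp add: algebra_simps)
  have "cmod (coeff (K * L) i) \<le> real (degree (K * L) choose i) * mahler_measure_poly (K * L)"
    by (rule mignotte_complex)
  also have "\<dots> \<le> real ((degree K + length (a # as) - 1) choose i) * mahler_measure_poly (K * (\<Prod>a\<leftarrow>a # as. [:- a, 1:]))"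
  proof (rule mult_mono)
    show "real (degree (K * L) choose i) \<le> real (degree K + length (a # as) - 1 choose i)"
      using degree_mult_eq[OF Cons.prems L(1)] L(2) by simp
    show "mahler_measure_poly (K * L) \<le> mahler_measure_poly (K * (\<Prod>a\<leftarrow>a # as. [:- a, 1:]))"
      unfolding P by (rule mahler_lin_ge)
    show "0 \<le> mahler_measure_poly (K * L)"
      unfolding mahler_measure_poly_via_monic using mahler_measure_monic_ge_0 by simp
  qed simp
  finally have t1: "cmod (coeff (K * L) i) \<le> real ((degree K + length (a # as) - 1) choose i) * mahler_measure_poly (K * (\<Prod>a\<leftarrow>a # as. [:- a, 1:]))" .
  have "cmod (coeff ((K * [:- a, 1:]) * pderiv L) i) \<le>
     real (length as) * real ((degree (K * [:- a, 1:]) + length as - 1) choose i) * mahler_measure_poly ((K * [:- a, 1:]) * L)"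
    using Cons.IH[OF K'(1)] unfolding L_def by simp
  also have "\<dots> = real (length as) * real ((degree K + length (a # as) - 1) choose i) * mahler_measure_poly (K * (\<Prod>a\<leftarrow>a # as. [:- a, 1:]))"
  proof -
    have e: "(K * [:- a, 1:]) * L = (K * L) * [:- a, 1:]" by (simp only: mult.assoc mult.commute[of L])
    have d: "degree (K * [:- a, 1:]) + length as - 1 = degree K + length (a # as) - 1"
      using K'2 by simp
    show ?thesis unfolding P e d ..
  qed
  finally have t2: "cmod (coeff ((K * [:- a, 1:]) * pderiv L) i) \<le> real (length as) * real ((degree K + length (a # as) - 1) choose i) * mahler_measure_poly (K * (\<Prod>a\<leftarrow>a # as. [:- a, 1:]))" .
  have "cmod (coeff (K * pderiv (\<Prod>a\<leftarrow>a # as. [:- a, 1:])) i) \<le> cmod (coeff (K * L) i) + cmod (coeff ((K * [:- a, 1:]) * pderiv L) i)"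
    unfolding eq coeff_add by (rule norm_triangle_ineq)
  also have "\<dots> \<le> real (length (a # as)) * real ((degree K + length (a # as) - 1) choose i) * mahler_measure_poly (K * (\<Prod>a\<leftarrow>a # as. [:- a, 1:]))"
    using add_mono[OF t1 t2] by (simp add: algebra_simps)
  finally show ?case .
qed

lemma coeff_bound_int:
  fixes f rg H :: "int poly"
  assumes f: "f = rg * H" "f \<noteq> 0"
  shows "\<bar>real_of_int (coeff (H * pderiv rg) i)\<bar> \<le> real (degree rg) * real ((degree f - 1) choose i) * mahler_measure f"
proof -
  let ?C = "map_poly complex_of_int"
  define as where "as = complex_roots_complex (?C rg)"
  have rg0: "rg \<noteq> 0" "H \<noteq> 0" using f by auto
  have rgC: "?C rg = smult (lead_coeff (?C rg)) (\<Prod>a\<leftarrow>as. [:- a, 1:])" "length as = degree rg"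
    using complex_roots[of "?C rg"] unfolding as_def by auto
  define K where "K = smult (lead_coeff (?C rg)) (?C H)"
  have lc0: "lead_coeff (?C rg) \<noteq> 0" using rg0 by simp
  have K0: "K \<noteq> 0" "degree K = degree H" using lc0 rg0 unfolding K_def by auto
  have e1: "?C (H * pderiv rg) = K * pderiv (\<Prod>a\<leftarrow>as. [:- a, 1:])"
    unfolding K_def of_int_hom.map_poly_pderiv of_int_poly_hom.hom_mult
    by (subst rgC(1)) (simp add: pderiv_smult)
  have e2: "K * (\<Prod>a\<leftarrow>as. [:- a, 1:]) = ?C f"
    unfolding K_def f(1) of_int_poly_hom.hom_mult by (subst (2) rgC(1)) (simp add: mult_ac)
  have deg: "degree K + degree rg - 1 = degree f - 1"
    using K0 rgC(2) rg0 f by (simp add: degree_mult_eq)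
  have "\<bar>real_of_int (coeff (H * pderiv rg) i)\<bar> = cmod (coeff (?C (H * pderiv rg)) i)"
    by simp
  also have "\<dots> \<le> real (length as) * real ((degree K + length as - 1) choose i) * mahler_measure_poly (K * (\<Prod>a\<leftarrow>as. [:- a, 1:]))"
    unfolding e1 by (rule pderiv_linprod_bound[OF K0(1)])
  also have "\<dots> = real (degree rg) * real ((degree f - 1) choose i) * mahler_measure f"
    unfolding e2 rgC(2) deg mahler_measure_def ..
  finally show ?thesis .
qed

lemma gauss_P:
  fixes f :: "int poly" and g :: "rat poly"
  assumes g: "monic g" and dvd: "g dvd of_int_poly f" and f0: "f \<noteq> 0"
  shows "\<exists>P :: int poly. g * of_int_poly P = of_int_poly f * pderiv g \<and>
     (\<forall>i. \<bar>real_of_int (coeff P i)\<bar> \<le> real (degree f) * real ((degree f - 1) choose i) * mahler_measure f)"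
proof -
  obtain h where fh: "of_int_poly f = g * h" using dvd by (auto elim: dvdE)
  obtain r0 rg where rn: "rat_to_normalized_int_poly g = (r0, rg)" by force
  from rat_to_normalized_int_poly[OF rn] have gr: "g = smult r0 (of_int_poly rg)" by auto
  from rat_to_int_factor_explicit[OF fh rn] obtain R where fR: "f = rg * smult (content f) R" by auto
  define H where "H = smult (content f) R"
  have fH: "f = rg * H" using fR H_def by simp
  define P where "P = H * pderiv rg"
  have "g * of_int_poly P = of_int_poly f * pderiv g"
    unfolding P_def fH gr of_int_poly_hom.hom_mult of_int_hom.map_poly_pderiv pderiv_smult
    by (simp add: mult_ac)
  moreover have "degree rg \<le> degree f" using fH f0 by (intro dvd_imp_degree_le) auto
  moreover have "\<bar>real_of_int (coeff P i)\<bar> \<le> real (degree rg) * real ((degree f - 1) choose i) * mahler_measure f" for i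
    unfolding P_def by (rule coeff_bound_int[OF fH f0])
  ultimately show ?thesis
  proof (intro exI[of _ P] conjI allI)
    fix i
    assume d: "degree rg \<le> degree f" and b: "\<And>i. \<bar>real_of_int (coeff P i)\<bar> \<le> real (degree rg) * real ((degree f - 1) choose i) * mahler_measure f"
    have "real (degree rg) * real ((degree f - 1) choose i) * mahler_measure f \<le> real (degree f) * real ((degree f - 1) choose i) * mahler_measure f"
      using d by (intro mult_right_mono mahler_measure_ge_0) auto
    then show "\<bar>real_of_int (coeff P i)\<bar> \<le> real (degree f) * real ((degree f - 1) choose i) * mahler_measure f"
      using b[of i] by linarith
  qed
qed



lemma pow_dvd_all_zero:
  fixes v x :: int
  assumes v: "v \<ge> 2" and d: "\<forall>k. v ^ k dvd x"
  shows "x = 0"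
proof (rule ccontr)
  assume x: "x \<noteq> 0"
  define k where "k = nat \<bar>x\<bar>"
  have "v ^ k dvd x" using d by auto
  then have "\<bar>v ^ k\<bar> \<le> \<bar>x\<bar>" using x by (simp add: dvd_imp_le_int)
  moreover have "(2::int) ^ k \<le> v ^ k" using v by (intro power_mono) auto
  moreover have "int k < 2 ^ k"
  proof -
    have "int k < int (2 ^ k)" using less_exp[of k] by (simp only: of_nat_less_iff)
    then show ?thesis by simp
  qed
  ultimately show False using v unfolding k_def by auto
qed

context
  fixes v :: int and ZT :: "'z::idom itself"
  assumes vp: "prime v" and Zv: "is_vadic_integers v TYPE('z)"
begin

lemma v_ge2: "v \<ge> 2" using prime_gt_1_int[OF vp] by simp

lemma Zv_dvd: "((of_int (v ^ k) :: 'z) dvd of_int a) \<longleftrightarrow> v ^ k dvd a"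
  using Zv unfolding is_vadic_integers_def by blast

lemma Zv_approx: "\<exists>a::int. (of_int (v ^ k) :: 'z) dvd (x - of_int a)"
  using Zv unfolding is_vadic_integers_def by blast

lemma Zv_of_int_eq: "(of_int a :: 'z) = of_int b \<Longrightarrow> a = b"
proof -
  assume "(of_int a :: 'z) = of_int b"
  then have "(of_int (a - b) :: 'z) = 0" by simp
  then have "\<forall>k. v ^ k dvd (a - b)" using Zv_dvd by (metis dvd_0_right)
  then have "a - b = 0" by (rule pow_dvd_all_zero[OF v_ge2])
  then show "a = b" by simp
qed

lemma Zv_of_int_0: "(of_int a :: 'z) = 0 \<longleftrightarrow> a = 0"
  using Zv_of_int_eq[of a 0] by auto

definition smodP :: "nat \<Rightarrow> 'z \<Rightarrow> int \<Rightarrow> bool" where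
  "smodP l c a \<longleftrightarrow> - (v ^ l) < 2 * a \<and> 2 * a \<le> v ^ l \<and> (of_int (v ^ l) :: 'z) dvd (c - of_int a)"

lemma smod_ex1: "\<exists>!a. smodP l c a"
proof -
  define M where "M = v ^ l"
  have M0: "M > 0" unfolding M_def using v_ge2 by simp
  obtain a0 where a0: "(of_int M :: 'z) dvd (c - of_int a0)" using Zv_approx unfolding M_def by blast
  define a1 where "a1 = a0 mod M"
  define a where "a = (if 2 * a1 \<le> M then a1 else a1 - M)"
  have a1r: "0 \<le> a1" "a1 < M" unfolding a1_def using M0 by auto
  have ar: "- M < 2 * a" "2 * a \<le> M" unfolding a_def using a1r by auto
  have "M dvd (a0 - a)" unfolding a_def a1_def
    by (auto simp: mod_eq_dvd_iff[symmetric] mod_diff_right_eq[symmetric] intro: dvd_diff)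
  then obtain kk where kk: "a0 - a = M * kk" by (rule dvdE)
  have "(of_int (a0 - a) :: 'z) = of_int M * of_int kk" by (simp only: kk of_int_mult)
  then have "(of_int M :: 'z) dvd of_int (a0 - a)" by (rule dvdI)
  then have "(of_int M :: 'z) dvd (c - of_int a0) + of_int (a0 - a)" using a0 by (rule dvd_add[rotated])
  then have ex: "smodP l c a" unfolding smodP_def M_def[symmetric] using ar by simp
  have uniq: "b = a" if "smodP l c b" for b
  proof -
    have d1: "(of_int M :: 'z) dvd (c - of_int a)" using ex unfolding smodP_def M_def by auto
    have d2: "(of_int M :: 'z) dvd (c - of_int b)" using that unfolding smodP_def M_def by auto
    have "(of_int M :: 'z) dvd (c - of_int a) - (c - of_int b)"
      using dvd_diff[OF d1 d2] .
    then have "(of_int M :: 'z) dvd of_int (b - a)" by simp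
    then have "M dvd (b - a)" using Zv_dvd unfolding M_def by blast
    then obtain q where q: "b - a = M * q" by (auto elim: dvdE)
    have br: "- M < 2 * b" "2 * b \<le> M" using that unfolding smodP_def M_def by auto
    have "b - a < M" "- M < b - a" using ar br by linarith+
    then have lt: "\<bar>M * q\<bar> < M" using q by (simp add: abs_less_iff)
    have q0: "q = 0"
    proof (rule ccontr)
      assume "q \<noteq> 0"
      then have "1 \<le> \<bar>q\<bar>" by linarith
      then have "M * 1 \<le> M * \<bar>q\<bar>" using M0 by (intro mult_left_mono) auto
      then show False using lt M0 by (simp add: abs_mult)
    qed
    from q0 q show ?thesis by simp
  qed
  show ?thesis using ex uniq by blast
qed

lemma smod_prop: "smodP l c (smod_v v l c)"
proof -
  have "smod_v v l c = (THE a. smodP l c a)" unfolding smod_v_def smodP_def ..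
  then show ?thesis using theI'[OF smod_ex1] by simp
qed

lemma smod_min:
  assumes "(of_int (v ^ l) :: 'z) dvd (c - of_int N)"
  shows "\<bar>smod_v v l c\<bar> \<le> \<bar>N\<bar>"
proof -
  define M where "M = v ^ l"
  define a where "a = smod_v v l c"
  have M0: "M > 0" unfolding M_def using v_ge2 by simp
  have P: "- M < 2 * a" "2 * a \<le> M" "(of_int M :: 'z) dvd (c - of_int a)"
    using smod_prop[of l c] unfolding smodP_def a_def M_def by auto
  have "(of_int M :: 'z) dvd (c - of_int a) - (c - of_int N)"
    using dvd_diff[OF P(3) assms[folded M_def]] .
  then have "(of_int M :: 'z) dvd of_int (N - a)" by simp
  then have "M dvd (N - a)" using Zv_dvd unfolding M_def by blast
  then obtain q where q0: "N - a = M * q" by (rule dvdE)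
  then have q: "N = a + M * q" by simp
  show ?thesis
  proof (cases "q = 0")
    case True then show ?thesis using q a_def by simp
  next
    case False
    then have "1 \<le> \<bar>q\<bar>" by linarith
    then have "M * 1 \<le> M * \<bar>q\<bar>" using M0 by (intro mult_left_mono) auto
    then have Mq: "\<bar>M * q\<bar> \<ge> M" using M0 by (simp add: abs_mult)
    have t: "\<bar>N\<bar> \<ge> \<bar>M * q\<bar> - \<bar>a\<bar>" unfolding q by linarith
    have "2 * \<bar>a\<bar> \<le> M" using P(1,2) by linarith
    then show ?thesis using t Mq unfolding a_def by linarith
  qed
qed

lemma smod_cong: "(of_int (v ^ l) :: 'z) dvd (c - of_int (smod_v v l c))"
  using smod_prop[of l c] unfolding smodP_def by auto

lemma fract_of_int_0: "(of_int a :: 'z fract) = 0 \<longleftrightarrow> a = 0"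
proof -
  have "(of_int a :: 'z fract) = to_fract (of_int a :: 'z)" by (simp only: to_fract_hom.hom_of_int)
  then show ?thesis using Zv_of_int_0[of a] to_fract_hom.hom_0_iff by metis
qed

lemma rtf_div: assumes b: "b \<noteq> 0"
  shows "rat_to_fract (of_int a / of_int b :: rat) = (of_int a / of_int b :: 'z fract)"
proof -
  define q where "q = (of_int a / of_int b :: rat)"
  obtain a' b' where qo: "quotient_of q = (a', b')" by force
  have b'0: "b' > 0" using quotient_of_denom_pos[OF qo] .
  have q': "q = of_int a' / of_int b'" using quotient_of_div[OF qo] .
  have "rat_to_fract q = Fract (of_int a' :: 'z) (of_int b')" unfolding rat_to_fract_def qo by simp
  also have "\<dots> = (of_int a' / of_int b' :: 'z fract)" unfolding Fract_conv_to_fract by (simp only: to_fract_hom.hom_of_int)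
  also have "\<dots> = (of_int a / of_int b :: 'z fract)"
  proof -
    have "(of_int a' / of_int b' :: rat) = of_int a / of_int b" using q' q_def by simp
    then have "(of_int a' * of_int b :: rat) = of_int a * of_int b'" using b b'0 by (simp add: frac_eq_eq)
    then have e: "a' * b = a * b'" by (metis of_int_eq_iff of_int_mult)
    have "(of_int a' * of_int b :: 'z fract) = of_int a * of_int b'"
      by (metis e of_int_mult)
    moreover have "(of_int b :: 'z fract) \<noteq> 0" "(of_int b' :: 'z fract) \<noteq> 0"
      using b b'0 fract_of_int_0 by auto
    ultimately show ?thesis by (simp add: frac_eq_eq)
  qed
  finally show ?thesis unfolding q_def .
qed

lemma rtf_repr: obtains a b where "b \<noteq> 0" "q = (of_int a / of_int b :: rat)"
proof -
  obtain a b where qo: "quotient_of q = (a, b)" by force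
  show ?thesis using that[OF _ quotient_of_div[OF qo]] quotient_of_denom_pos[OF qo] by simp
qed

lemma rtf_of_int: "rat_to_fract (of_int a :: rat) = (of_int a :: 'z fract)"
  using rtf_div[of 1 a] by simp

lemma rtf_hom: "idom_hom (rat_to_fract :: rat \<Rightarrow> 'z fract)"
proof -
  have add: "rat_to_fract (x + y) = (rat_to_fract x + rat_to_fract y :: 'z fract)" for x y :: rat
  proof -
    obtain a b where ab: "b \<noteq> 0" "x = of_int a / of_int b" by (rule rtf_repr)
    obtain c d where cd: "d \<noteq> 0" "y = of_int c / of_int d" by (rule rtf_repr)
    have e: "x + y = of_int (a * d + c * b) / of_int (b * d)" using ab cd by (simp add: add_frac_eq)
    have "rat_to_fract (x + y) = (of_int (a * d + c * b) / of_int (b * d) :: 'z fract)"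
      unfolding e using ab cd by (intro rtf_div) simp
    also have "\<dots> = (of_int a / of_int b + of_int c / of_int d :: 'z fract)"
      using ab cd fract_of_int_0 by (simp add: add_frac_eq)
    finally show ?thesis using rtf_div ab cd by simp
  qed
  have mult: "rat_to_fract (x * y) = (rat_to_fract x * rat_to_fract y :: 'z fract)" for x y :: rat
  proof -
    obtain a b where ab: "b \<noteq> 0" "x = of_int a / of_int b" by (rule rtf_repr)
    obtain c d where cd: "d \<noteq> 0" "y = of_int c / of_int d" by (rule rtf_repr)
    have e: "x * y = of_int (a * c) / of_int (b * d)" using ab cd by simp
    have "rat_to_fract (x * y) = (of_int (a * c) / of_int (b * d) :: 'z fract)"
      unfolding e using ab cd by (intro rtf_div) simp
    also have "\<dots> = (of_int a / of_int b * (of_int c / of_int d) :: 'z fract)"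
      by simp
    finally show ?thesis using rtf_div ab cd by simp
  qed
  have one: "rat_to_fract (1::rat) = (1 :: 'z fract)" using rtf_of_int[of 1] by simp
  have zero: "rat_to_fract (0::rat) = (0 :: 'z fract)" using rtf_of_int[of 0] by simp
  show ?thesis
    by (unfold_locales) (auto simp: add mult one zero)
qed

end

lemma pquot_eq:
  fixes fs :: "nat \<Rightarrow> 'z::idom poly"
  assumes fs_fact: "map_poly of_int f = smult (of_int (lead_coeff f)) (\<Prod>k\<in>{1..r}. fs k)"
    and mon: "\<forall>k\<in>{1..r}. monic (fs k)" and k: "k \<in> {1..r}"
  shows "map_poly of_int f = fs k * pquot (map_poly of_int f) (fs k)"
proof -
  define Q where "Q = smult (of_int (lead_coeff f)) (\<Prod>k\<in>{1..r} - {k}. fs k)"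
  have FQ: "map_poly of_int f = fs k * Q"
    unfolding fs_fact Q_def using k by (simp add: prod.remove mult_smult_right)
  have lc1: "lead_coeff (fs k) = 1" using mon k by auto
  have nz: "fs k \<noteq> 0"
  proof
    assume "fs k = 0"
    then have "lead_coeff (fs k) = 0" by simp
    with lc1 show False by simp
  qed
  have "pquot (map_poly of_int f) (fs k) = Q"
    unfolding pquot_def
  proof (rule the1_equality)
    show "\<exists>!q. map_poly of_int f = fs k * q"
      using FQ nz by (metis mult_left_cancel)
  qed (rule FQ)
  then show ?thesis using FQ by simp
qed

lemma logderiv:
  fixes fs :: "nat \<Rightarrow> 'z::idom poly"
  assumes fs_fact: "map_poly of_int f = smult (of_int (lead_coeff f)) (\<Prod>k\<in>{1..r}. fs k)"
    and mon: "\<forall>k\<in>{1..r}. monic (fs k)" and e01: "\<forall>k\<in>{1..r}. e k \<in> {0, 1}"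
  shows "(\<Prod>k\<in>{1..r}. fs k ^ nat (e k)) * Phi f fs r e = map_poly of_int f * pderiv (\<Prod>k\<in>{1..r}. fs k ^ nat (e k))"
proof -
  define F where "F = (map_poly of_int f :: 'z poly)"
  define K where "K = {k\<in>{1..r}. e k = 1}"
  define X where "X = (\<lambda>k. pquot F (fs k) * pderiv (fs k))"
  have finK: "finite K" unfolding K_def by auto
  have G: "(\<Prod>k\<in>{1..r}. fs k ^ nat (e k)) = (\<Prod>k\<in>K. fs k)"
  proof -
    have "(\<Prod>k\<in>K. fs k) = (\<Prod>k\<in>{1..r}. if e k = 1 then fs k else 1)"
      unfolding K_def by (rule prod.inter_filter) simp
    also have "\<dots> = (\<Prod>k\<in>{1..r}. fs k ^ nat (e k))"
    proof (rule prod.cong)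
      fix x assume "x \<in> {1..r}"
      then have "e x = 0 \<or> e x = 1" using e01 by auto
      then show "(if e x = 1 then fs x else 1) = fs x ^ nat (e x)" by auto
    qed simp
    finally show ?thesis by simp
  qed
  have Ph: "Phi f fs r e = (\<Sum>k\<in>K. X k)"
  proof -
    have "(\<Sum>k\<in>K. X k) = (\<Sum>k\<in>{1..r}. if e k = 1 then X k else 0)"
      unfolding K_def by (rule sum.inter_filter) simp
    also have "\<dots> = Phi f fs r e"
      unfolding Phi_def X_def F_def
    proof (rule sum.cong)
      fix x assume "x \<in> {1..r}"
      then have "e x = 0 \<or> e x = 1" using e01 by auto
      then show "(if e x = 1 then pquot (map_poly of_int f) (fs x) * pderiv (fs x) else 0) =
         smult (of_int (e x)) (pquot (map_poly of_int f) (fs x) * pderiv (fs x))" by auto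
    qed simp
    finally show ?thesis by simp
  qed
  have trm: "(\<Prod>k\<in>K. fs k) * X k = F * (prod fs (K - {k}) * pderiv (fs k))" if kK: "k \<in> K" for k
  proof -
    have k1: "k \<in> {1..r}" using kK unfolding K_def by auto
    have "(\<Prod>k\<in>K. fs k) = fs k * prod fs (K - {k})" using finK kK by (simp add: prod.remove)
    then have "(\<Prod>k\<in>K. fs k) * X k = (fs k * pquot F (fs k)) * (prod fs (K - {k}) * pderiv (fs k))"
      unfolding X_def by (simp add: mult_ac)
    also have "fs k * pquot F (fs k) = F" using pquot_eq[OF fs_fact mon k1] unfolding F_def by simp
    finally show ?thesis .
  qed
  have "(\<Prod>k\<in>K. fs k) * (\<Sum>k\<in>K. X k) = (\<Sum>k\<in>K. (\<Prod>k\<in>K. fs k) * X k)"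
    by (simp add: sum_distrib_left)
  also have "\<dots> = (\<Sum>k\<in>K. F * (prod fs (K - {k}) * pderiv (fs k)))"
    by (rule sum.cong) (auto simp: trm)
  also have "\<dots> = F * pderiv (\<Prod>k\<in>K. fs k)"
    by (simp add: pderiv_prod sum_distrib_left)
  finally show ?thesis unfolding G Ph F_def .
qed

context
  fixes v :: int and ZT :: "'z::idom itself"
  assumes vp: "prime v" and Zv: "is_vadic_integers v TYPE('z)"
begin

lemma Phi_P:
  fixes fs :: "nat \<Rightarrow> 'z poly" and P f :: "int poly" and g :: "rat poly"
  assumes fs_fact: "map_poly of_int f = smult (of_int (lead_coeff f)) (\<Prod>k\<in>{1..r}. fs k)"
    and mon: "\<forall>k\<in>{1..r}. monic (fs k)" and e01: "\<forall>k\<in>{1..r}. e k \<in> {0, 1}"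
    and wdef: "map_poly rat_to_fract g = map_poly to_fract (\<Prod>k\<in>{1..r}. fs k ^ nat (e k))"
    and gP: "g * of_int_poly P = of_int_poly f * pderiv g"
  shows "Phi f fs r e = map_poly of_int P"
proof -
  interpret rf: idom_hom "rat_to_fract :: rat \<Rightarrow> 'z fract" by (rule rtf_hom[OF vp Zv])
  interpret rfp: map_poly_idom_hom "rat_to_fract :: rat \<Rightarrow> 'z fract"
    using rtf_hom[OF vp Zv] by (simp add: map_poly_idom_hom_def)
  interpret tfp: map_poly_inj_idom_hom "to_fract :: 'z \<Rightarrow> 'z fract" ..
  define G where "G = (\<Prod>k\<in>{1..r}. fs k ^ nat (e k))"
  define F where "F = (map_poly of_int f :: 'z poly)"
  have oi: "map_poly (rat_to_fract :: rat \<Rightarrow> 'z fract) (of_int_poly X) = map_poly to_fract (map_poly of_int X :: 'z poly)" for X :: "int poly"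
  proof -
    have "map_poly (rat_to_fract :: rat \<Rightarrow> 'z fract) (of_int_poly X) = map_poly (rat_to_fract \<circ> of_int) X"
      by (rule map_poly_map_poly) simp
    also have "\<dots> = map_poly (to_fract \<circ> (of_int :: int \<Rightarrow> 'z)) X"
      by (rule map_poly_cong) (simp add: rtf_of_int[OF vp Zv] to_fract_hom.hom_of_int)
    also have "\<dots> = map_poly to_fract (map_poly of_int X :: 'z poly)"
      by (rule map_poly_map_poly[symmetric]) simp
    finally show ?thesis .
  qed
  have "map_poly (rat_to_fract :: rat \<Rightarrow> 'z fract) (g * of_int_poly P) = map_poly rat_to_fract (of_int_poly f * pderiv g)"
    using gP by simp
  then have "map_poly to_fract G * map_poly to_fract (map_poly of_int P :: 'z poly) = map_poly to_fract F * pderiv (map_poly to_fract G)"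
    unfolding rfp.hom_mult rf.map_poly_pderiv oi wdef G_def F_def .
  then have "map_poly to_fract (G * map_poly of_int P) = map_poly to_fract (F * pderiv G)"
    by (simp only: tfp.hom_mult to_fract_hom.map_poly_pderiv)
  then have e1: "G * map_poly of_int P = F * pderiv G" by (rule tfp.injectivity)
  have e2: "G * Phi f fs r e = F * pderiv G"
    unfolding G_def F_def by (rule logderiv[OF fs_fact mon e01])
  have "G \<noteq> 0" unfolding G_def using mon by (auto simp: prod_zero_iff)
  moreover have "G * Phi f fs r e = G * map_poly of_int P" using e1 e2 by simp
  ultimately show ?thesis by simp
qed

end



lemma Phi_unitv:
  assumes "k \<in> {1..r}"
  shows "Phi f fs r (unitv k) = pquot (map_poly of_int f) (fs k) * pderiv (fs k)"
proof -
  have "Phi f fs r (unitv k) = (\<Sum>k'\<in>{1..r}. if k' = k then pquot (map_poly of_int f) (fs k') * pderiv (fs k') else 0)"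
    unfolding Phi_def unitv_def by (rule sum.cong) auto
  also have "\<dots> = pquot (map_poly of_int f) (fs k) * pderiv (fs k)" using assms by simp
  finally show ?thesis .
qed

lemma coeff_Phi:
  "coeff (Phi f fs r e) i = (\<Sum>k\<in>{1..r}. of_int (e k) * coeff (pquot (map_poly of_int f) (fs k) * pderiv (fs k)) i)"
  unfolding Phi_def by (simp add: coeff_sum)

context
  fixes v :: int and ZT :: "'z::idom itself"
  assumes vp: "prime v" and Zv: "is_vadic_integers v TYPE('z)"
begin

lemma Phi_cong:
  fixes fs :: "nat \<Rightarrow> 'z poly"
  shows "(of_int (v ^ l) :: 'z) dvd (coeff (Phi f fs r e) i - of_int (\<Sum>k\<in>{1..r}. e k * Tprime v l f fs r i (unitv k)))"
proof -
  define X where "X = (\<lambda>k. coeff (pquot (map_poly of_int f) (fs k) * pderiv (fs k)) i)"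
  have t: "Tprime v l f fs r i (unitv k) = smod_v v l (X k)" if "k \<in> {1..r}" for k
    unfolding Tprime_def X_def Phi_unitv[OF that] ..
  have "coeff (Phi f fs r e) i - of_int (\<Sum>k\<in>{1..r}. e k * Tprime v l f fs r i (unitv k))
      = (\<Sum>k\<in>{1..r}. of_int (e k) * (X k - of_int (smod_v v l (X k))))"
  proof -
    have "of_int (\<Sum>k\<in>{1..r}. e k * Tprime v l f fs r i (unitv k)) = (\<Sum>k\<in>{1..r}. (of_int (e k) :: 'z) * of_int (smod_v v l (X k)))"
      by (simp add: t)
    moreover have "coeff (Phi f fs r e) i = (\<Sum>k\<in>{1..r}. of_int (e k) * X k)"
      unfolding coeff_Phi X_def ..
    ultimately show ?thesis by (simp add: sum_subtractf[symmetric] right_diff_distrib)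
  qed
  also have "(of_int (v ^ l) :: 'z) dvd \<dots>"
    by (intro dvd_sum dvd_mult smod_cong[OF vp Zv])
  finally show ?thesis .
qed

lemma Tprime_le:
  fixes fs :: "nat \<Rightarrow> 'z poly" and N a :: int
  assumes "N = (\<Sum>k\<in>{1..r}. e k * Tprime v l f fs r i (unitv k)) + a * v ^ l"
  shows "\<bar>Tprime v l f fs r i e\<bar> \<le> \<bar>N\<bar>"
proof -
  have d1: "(of_int (v ^ l) :: 'z) dvd (coeff (Phi f fs r e) i - of_int (\<Sum>k\<in>{1..r}. e k * Tprime v l f fs r i (unitv k)))"
    by (rule Phi_cong)
  have d2: "(of_int (v ^ l) :: 'z) dvd of_int (a * v ^ l)" by (simp add: of_int_mult)
  have "(of_int (v ^ l) :: 'z) dvd (coeff (Phi f fs r e) i - of_int (\<Sum>k\<in>{1..r}. e k * Tprime v l f fs r i (unitv k))) - of_int (a * v ^ l)"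
    using dvd_diff[OF d1 d2] .
  then have "(of_int (v ^ l) :: 'z) dvd (coeff (Phi f fs r e) i - of_int N)"
    unfolding assms by (simp add: algebra_simps)
  then show ?thesis unfolding Tprime_def by (rule smod_min[OF vp Zv])
qed

end

lemma one_plus_quarter: "1 + real r / 4 \<le> 2 ^ r"
proof (induction r)
  case (Suc r)
  have "(1::real) \<le> 2 ^ r" by simp
  moreover have "1 + real (Suc r) / 4 = (1 + real r / 4) + 1/4" by (simp add: field_simps)
  ultimately show ?case using Suc by simp
qed simp

lemma vnorm_restrict: "vnorm r (\<lambda>k. if k \<in> {1..r} then x k else 0) \<le> vnorm (r + 1) x"
proof -
  have "ipr r (\<lambda>k. if k \<in> {1..r} then x k else 0) (\<lambda>k. if k \<in> {1..r} then x k else 0) = (\<Sum>k\<in>{1..r}. x k * x k)"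
    unfolding ipr_def by (rule sum.cong) auto
  also have "\<dots> \<le> (\<Sum>k\<in>{1..r+1}. x k * x k)"
    by (rule sum_mono2) auto
  finally show ?thesis unfolding vnorm_def ipr_def by simp
qed

lemma coord_le_vnorm: "k \<in> {1..D} \<Longrightarrow> \<bar>x k\<bar> \<le> vnorm D x"
proof -
  assume k: "k \<in> {1..D}"
  have "x k * x k \<le> (\<Sum>k\<in>{1..D}. x k * x k)"
    using k by (intro member_le_sum) auto
  then have "sqrt (x k * x k) \<le> sqrt (\<Sum>k\<in>{1..D}. x k * x k)" by (rule real_sqrt_le_mono)
  moreover have "sqrt (x k * x k) = \<bar>x k\<bar>" using real_sqrt_abs[of "x k"] by (simp add: power2_eq_square)
  ultimately show ?thesis unfolding vnorm_def ipr_def by simp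
qed



lemma gen_eval:
  fixes c :: "nat \<Rightarrow> int" and bb :: "nat \<Rightarrow> nat \<Rightarrow> int"
  assumes gen: "gen = (\<lambda>j k. if j \<le> rr then (if k \<in> {1..r} then real_of_int (bb j k) else if k = r + 1 then (\<Sum>k'\<in>{1..r}. real_of_int (bb j k') * T k') else 0) else (if k = r + 1 then Q else 0))"
  shows "k \<in> {1..r} \<Longrightarrow> (\<Sum>t\<in>{1..rr+1}. real_of_int (c t) * gen t k) = (\<Sum>t\<in>{1..rr}. real_of_int (c t) * real_of_int (bb t k))"
    and "(\<Sum>t\<in>{1..rr+1}. real_of_int (c t) * gen t (r+1)) = (\<Sum>k\<in>{1..r}. real_of_int (\<Sum>t\<in>{1..rr}. c t * bb t k) * T k) + real_of_int (c (rr+1)) * Q"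
    and "k \<notin> {1..r+1} \<Longrightarrow> (\<Sum>t\<in>{1..rr+1}. real_of_int (c t) * gen t k) = 0"
proof -
  have split: "{1..rr+1} = insert (rr+1) {1..rr}" by auto
  have fin: "finite {1..rr}" "rr + 1 \<notin> {1..rr}" by auto
  {
    assume k: "k \<in> {1..r}"
    show "(\<Sum>t\<in>{1..rr+1}. real_of_int (c t) * gen t k) = (\<Sum>t\<in>{1..rr}. real_of_int (c t) * real_of_int (bb t k))"
      unfolding split sum.insert[OF fin] using k by (auto simp: gen intro!: sum.cong)
  }
  {
    have "(\<Sum>t\<in>{1..rr+1}. real_of_int (c t) * gen t (r+1)) =
      real_of_int (c (rr+1)) * Q + (\<Sum>t\<in>{1..rr}. real_of_int (c t) * (\<Sum>k'\<in>{1..r}. real_of_int (bb t k') * T k'))"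
      unfolding split sum.insert[OF fin] by (auto simp: gen intro!: sum.cong)
    also have "(\<Sum>t\<in>{1..rr}. real_of_int (c t) * (\<Sum>k'\<in>{1..r}. real_of_int (bb t k') * T k')) =
       (\<Sum>k\<in>{1..r}. real_of_int (\<Sum>t\<in>{1..rr}. c t * bb t k) * T k)"
      by (simp add: sum_distrib_left sum_distrib_right mult_ac) (rule sum.swap)
    finally show "(\<Sum>t\<in>{1..rr+1}. real_of_int (c t) * gen t (r+1)) = (\<Sum>k\<in>{1..r}. real_of_int (\<Sum>t\<in>{1..rr}. c t * bb t k) * T k) + real_of_int (c (rr+1)) * Q"
      by simp
  }
  {
    assume k: "k \<notin> {1..r+1}"
    then show "(\<Sum>t\<in>{1..rr+1}. real_of_int (c t) * gen t k) = 0"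
      by (auto simp: gen intro!: sum.neutral)
  }
qed


declare gso.simps[simp del]

theorem proposition4p4:
  fixes v :: int and l :: nat and f :: "int poly" and r s :: nat
    and fs :: "nat \<Rightarrow> 'z::idom poly" and g :: "nat \<Rightarrow> rat poly" and w :: "nat \<Rightarrow> nat \<Rightarrow> int"
    and i rr :: nat and bb :: "nat \<Rightarrow> nat \<Rightarrow> int" and b :: "nat \<Rightarrow> nat \<Rightarrow> real"
  assumes v_prime: "prime v"
    and Zv: "is_vadic_integers v TYPE('z)"
    and f_sep: "separable (of_int_poly f :: rat poly)"
    and f_deg: "degree f \<ge> 2"
    and lc: "\<not> v dvd lead_coeff f"
    and f_sep_mod: "poly_mod.coprime_m v f (pderiv f)"
    and fs_irr: "\<forall>k\<in>{1..r}. monic (fs k) \<and> irreducible (map_poly to_fract (fs k))"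
    and fs_fact: "map_poly of_int f = smult (of_int (lead_coeff f)) (\<Prod>k\<in>{1..r}. fs k)"
    and g_irr: "\<forall>j\<in>{1..s}. monic (g j) \<and> irreducible (g j)"
    and g_fact: "(of_int_poly f :: rat poly) = smult (of_int (lead_coeff f)) (\<Prod>j\<in>{1..s}. g j)"
    and w01: "\<forall>j\<in>{1..s}. \<forall>k\<in>{1..r}. w j k \<in> {0, 1}"
    and w_def: "\<forall>j\<in>{1..s}. map_poly rat_to_fract (g j)
                   = map_poly to_fract (\<Prod>k\<in>{1..r}. fs k ^ nat (w j k))"
    and l_pos: "l > 0"
    and i_le: "i \<le> degree f - 2"
    and bb_indep: "lin_indep r {1..rr} (\<lambda>j k. real_of_int (bb j k))"
    and W_sub: "zspan {1..s} (\<lambda>j k. if k \<in> {1..r} then real_of_int (w j k) else 0)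
                \<subseteq> zspan {1..rr} (\<lambda>j k. if k \<in> {1..r} then real_of_int (bb j k) else 0)"
    and b_basis: "zspan {1..rr + 1} b = zspan {1..rr + 1} (\<lambda>j k.
          if j \<le> rr then
            (if k \<in> {1..r} then real_of_int (bb j k)
             else if k = r + 1 then (\<Sum>k'\<in>{1..r}. real_of_int (bb j k') * Tval v l f fs r i (unitv k'))
             else 0)
          else (if k = r + 1 then real_of_int (v ^ l) / Bbound f i else 0))"
    and b_indep: "lin_indep (r + 1) {1..rr + 1} b"
    and b_lll: "lll_reduced (r + 1) (rr + 1) b"
  shows "let ri = (LEAST t. \<forall>j. t < j \<and> j \<le> rr + 1 \<longrightarrow> vnorm (r + 1) (gso (r + 1) b j) > real r + 2);
             bi = (\<lambda>j k. if k \<in> {1..r} then b j k else 0)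
         in zspan {1..s} (\<lambda>j k. if k \<in> {1..r} then real_of_int (w j k) else 0) \<subseteq> zspan {1..ri} bi
          \<and> zspan {1..ri} bi \<subseteq> zspan {1..rr} (\<lambda>j k. if k \<in> {1..r} then real_of_int (bb j k) else 0)
          \<and> (\<forall>j\<in>{1..ri}. vnorm r (bi j) \<le> (real r + 2) * 2 ^ r)
          \<and> (\<forall>j\<in>{1..ri}. \<forall>e::nat \<Rightarrow> int. (\<forall>k\<in>{1..r}. real_of_int (e k) = bi j k) \<longrightarrow>
               \<bar>Tval v l f fs r i e\<bar> \<le> (real r + 2) * 2 ^ r)"
proof -
  define R where "R = real r + 2"
  define B where "B = Bbound f i"
  define tt where "tt = (\<lambda>k. Tprime v l f fs r i (unitv k))"
  define gen where "gen = (\<lambda>j k. if j \<le> rr then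
            (if k \<in> {1..r} then real_of_int (bb j k)
             else if k = r + 1 then (\<Sum>k'\<in>{1..r}. real_of_int (bb j k') * Tval v l f fs r i (unitv k'))
             else 0)
          else (if k = r + 1 then real_of_int (v ^ l) / Bbound f i else 0))"
  have bbasis: "zspan {1..rr + 1} b = zspan {1..rr + 1} gen" using b_basis unfolding gen_def .
  note GE = gen_eval[OF gen_def]
  have Tv: "Tval v l f fs r i (unitv k) = real_of_int (tt k) / B" for k unfolding Tval_def tt_def B_def ..
  have f0: "f \<noteq> 0" using f_deg by auto
  have Bpos: "B > 0"
  proof -
    have "0 < (degree f - 1 choose i)" using i_le f_deg by (intro zero_less_binomial) simp
    moreover have "mahler_measure f \<ge> 1" using mahler_measure_poly_ge_1[OF f0] .
    moreover have "degree f > 0" using f_deg by simp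
    ultimately show ?thesis unfolding B_def Bbound_def by simp
  qed
  have mon: "\<forall>k\<in>{1..r}. monic (fs k)" using fs_irr by auto
  have rr_le: "rr \<le> r" using lin_indep_card[OF b_indep] by simp
  define Pr where "Pr = (\<lambda>t. \<forall>j. t < j \<and> j \<le> rr + 1 \<longrightarrow> vnorm (r + 1) (gso (r + 1) b j) > real r + 2)"
  define ri where "ri = (LEAST t. \<forall>j. t < j \<and> j \<le> rr + 1 \<longrightarrow> vnorm (r + 1) (gso (r + 1) b j) > real r + 2)"
  have riP: "ri = Least Pr" unfolding ri_def Pr_def ..
  define bi where "bi = (\<lambda>j k. if k \<in> {1..r} then b j k else 0)"
  have Prm: "Pr (rr + 1)" unfolding Pr_def
  proof (intro allI impI)
    fix j assume "rr + 1 < j \<and> j \<le> rr + 1"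
    then show "vnorm (r + 1) (gso (r + 1) b j) > real r + 2" by linarith
  qed
  have ri_le: "ri \<le> rr + 1" unfolding riP using Least_le[of Pr, OF Prm] .
  have "Pr ri" unfolding riP using LeastI[of Pr, OF Prm] .
  then have big: "\<forall>j. ri < j \<and> j \<le> rr + 1 \<longrightarrow> vnorm (r + 1) (gso (r + 1) b j) > R"
    unfolding Pr_def R_def .
  have small: "vnorm (r + 1) (gso (r + 1) b ri) \<le> R" if ri1: "ri \<ge> 1"
  proof -
    have "ri - 1 < Least Pr" using ri1 riP by simp
    then have "\<not> Pr (ri - 1)" by (rule not_less_Least)
    then obtain j where j: "ri - 1 < j" "j \<le> rr + 1" "\<not> vnorm (r + 1) (gso (r + 1) b j) > R"
      unfolding Pr_def R_def by auto
    have "j = ri" using j big by (cases "ri < j") auto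
    then show ?thesis using j by simp
  qed
  have bcoef: "\<exists>c::nat\<Rightarrow>int. b j = (\<lambda>k. \<Sum>t\<in>{1..rr+1}. real_of_int (c t) * gen t k)" if "j \<in> {1..rr+1}" for j
  proof -
    have "b j \<in> zspan {1..rr + 1} b" using that by (intro zspan_gen) auto
    then have "b j \<in> zspan {1..rr + 1} gen" unfolding bbasis .
    then show ?thesis unfolding zspan_def mem_Collect_eq .
  qed
  define bbv where "bbv = (\<lambda>j k. if k \<in> {1..r} then real_of_int (bb j k) else 0)"
  have bi_in: "bi j \<in> zspan {1..rr} bbv" if j: "j \<in> {1..rr+1}" for j
  proof -
    obtain c :: "nat \<Rightarrow> int" where c: "b j = (\<lambda>k. \<Sum>t\<in>{1..rr+1}. real_of_int (c t) * gen t k)"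
      using bcoef[OF j] by blast
    have "bi j = (\<lambda>k. \<Sum>t\<in>{1..rr}. real_of_int (c t) * bbv t k)"
    proof
      fix k
      show "bi j k = (\<Sum>t\<in>{1..rr}. real_of_int (c t) * bbv t k)"
      proof (cases "k \<in> {1..r}")
        case True
        then show ?thesis unfolding bi_def bbv_def c using GE(1)[of k c] by simp
      next
        case False
        then have "\<forall>t. bbv t k = 0" unfolding bbv_def by auto
        then show ?thesis using False unfolding bi_def by auto
      qed
    qed
    then show ?thesis unfolding zspan_def by blast
  qed
  have P1b: "zspan {1..ri} bi \<subseteq> zspan {1..rr} bbv"
    using bi_in ri_le by (intro zspan_subset) auto
  have bnorm: "vnorm (r + 1) (b j) \<le> R * 2 ^ r" if j: "j \<in> {1..ri}" for j
  proof -
    have ri1: "ri \<ge> 1" using j by auto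
    have R0: "R \<ge> 0" unfolding R_def by simp
    have "(vnorm (r + 1) (gso (r + 1) b ri))\<^sup>2 \<le> R\<^sup>2"
      using small[OF ri1] by (intro power_mono) (auto simp: vnorm_def ipr_nonneg)
    then have gri: "ipr (r + 1) (gso (r + 1) b ri) (gso (r + 1) b ri) \<le> R\<^sup>2" unfolding vnorm_sq .
    have "ipr (r + 1) (b j) (b j) \<le> (1 + real (j - 1) / 4) * 2 ^ (ri - 1) * R\<^sup>2"
      using j ri_le by (intro lll_b_bound[OF b_lll _ _ _ gri]) auto
    also have "\<dots> \<le> (2 ^ r * 2 ^ r) * R\<^sup>2"
    proof (rule mult_right_mono)
      have "1 + real (j - 1) / 4 \<le> 1 + real r / 4" using j ri_le rr_le by auto
      also have "\<dots> \<le> 2 ^ r" by (rule one_plus_quarter)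
      finally have a: "1 + real (j - 1) / 4 \<le> 2 ^ r" .
      have b: "(2::real) ^ (ri - 1) \<le> 2 ^ r" using ri_le rr_le by (intro power_increasing) auto
      show "(1 + real (j - 1) / 4) * 2 ^ (ri - 1) \<le> 2 ^ r * 2 ^ r"
        using a b by (intro mult_mono) auto
    qed simp
    also have "\<dots> = (R * 2 ^ r)\<^sup>2" by (simp add: power2_eq_square)
    finally have "ipr (r + 1) (b j) (b j) \<le> (R * 2 ^ r)\<^sup>2" .
    then have "sqrt (ipr (r + 1) (b j) (b j)) \<le> sqrt ((R * 2 ^ r)\<^sup>2)" by (rule real_sqrt_le_mono)
    then show ?thesis unfolding vnorm_def using R0 by simp
  qed
  have P2: "\<forall>j\<in>{1..ri}. vnorm r (bi j) \<le> (real r + 2) * 2 ^ r"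
  proof
    fix j assume j: "j \<in> {1..ri}"
    have "vnorm r (bi j) \<le> vnorm (r + 1) (b j)" unfolding bi_def by (rule vnorm_restrict)
    then show "vnorm r (bi j) \<le> (real r + 2) * 2 ^ r" using bnorm[OF j] unfolding R_def by simp
  qed
  have P3: "\<forall>j\<in>{1..ri}. \<forall>e::nat \<Rightarrow> int. (\<forall>k\<in>{1..r}. real_of_int (e k) = bi j k) \<longrightarrow>
               \<bar>Tval v l f fs r i e\<bar> \<le> (real r + 2) * 2 ^ r"
  proof (intro ballI allI impI)
    fix j and e :: "nat \<Rightarrow> int"
    assume j: "j \<in> {1..ri}" and e: "\<forall>k\<in>{1..r}. real_of_int (e k) = bi j k"
    have j': "j \<in> {1..rr+1}" using j ri_le by auto
    obtain c :: "nat \<Rightarrow> int" where c: "b j = (\<lambda>k. \<Sum>t\<in>{1..rr+1}. real_of_int (c t) * gen t k)"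
      using bcoef[OF j'] by blast
    have ek: "e k = (\<Sum>t\<in>{1..rr}. c t * bb t k)" if k: "k \<in> {1..r}" for k
    proof -
      have "real_of_int (e k) = b j k" using e k unfolding bi_def by auto
      also have "\<dots> = (\<Sum>t\<in>{1..rr}. real_of_int (c t) * real_of_int (bb t k))"
        unfolding c using GE(1)[OF k, of c] by simp
      finally have "real_of_int (e k) = real_of_int (\<Sum>t\<in>{1..rr}. c t * bb t k)" by simp
      then show ?thesis by (simp only: of_int_eq_iff)
    qed
    define N where "N = (\<Sum>k\<in>{1..r}. e k * tt k) + c (rr + 1) * v ^ l"
    have TN: "\<bar>Tprime v l f fs r i e\<bar> \<le> \<bar>N\<bar>"
    proof -
      have N': "N = (\<Sum>k\<in>{1..r}. e k * Tprime v l f fs r i (unitv k)) + c (rr+1) * v ^ l"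
        unfolding N_def tt_def by simp
      show ?thesis by (rule Tprime_le[OF v_prime Zv N'])
    qed
    have "b j (r + 1) = (\<Sum>k\<in>{1..r}. real_of_int (\<Sum>t\<in>{1..rr}. c t * bb t k) * Tval v l f fs r i (unitv k)) + real_of_int (c (rr+1)) * (real_of_int (v ^ l) / Bbound f i)"
      unfolding c using GE(2)[of c] by simp
    also have "\<dots> = (\<Sum>k\<in>{1..r}. real_of_int (e k) * (real_of_int (tt k) / B)) + real_of_int (c (rr+1)) * (real_of_int (v ^ l) / B)"
      by (simp add: Tv ek B_def)
    also have "\<dots> = real_of_int N / B"
      unfolding N_def by (simp add: sum_divide_distrib add_divide_distrib)
    finally have bN: "b j (r + 1) = real_of_int N / B" .
    have "\<bar>b j (r + 1)\<bar> \<le> vnorm (r + 1) (b j)" by (rule coord_le_vnorm) auto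
    also have "\<dots> \<le> R * 2 ^ r" by (rule bnorm[OF j])
    finally have "\<bar>real_of_int N\<bar> / B \<le> R * 2 ^ r" unfolding bN using Bpos by simp
    then have "\<bar>real_of_int N\<bar> \<le> R * 2 ^ r * B" using Bpos by (simp add: divide_le_eq)
    moreover have "\<bar>real_of_int (Tprime v l f fs r i e)\<bar> \<le> \<bar>real_of_int N\<bar>" using TN by linarith
    ultimately have "\<bar>real_of_int (Tprime v l f fs r i e)\<bar> / B \<le> R * 2 ^ r"
      using Bpos by (simp add: divide_le_eq)
    then show "\<bar>Tval v l f fs r i e\<bar> \<le> (real r + 2) * 2 ^ r"
      unfolding Tval_def B_def[symmetric] R_def using Bpos by simp
  qed
  define wv where "wv = (\<lambda>j k. if k \<in> {1..r} then real_of_int (w j k) else 0)"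
  have w_in: "wv j \<in> zspan {1..ri} bi" if j: "j \<in> {1..s}" for j
  proof -
    have gmon: "monic (g j)" using g_irr j by auto
    have gdvd: "g j dvd of_int_poly f"
    proof -
      have "(\<Prod>j\<in>{1..s}. g j) = g j * (\<Prod>j\<in>{1..s} - {j}. g j)" using j by (simp add: prod.remove)
      then show ?thesis unfolding g_fact by (simp add: dvd_smult)
    qed
    obtain P :: "int poly" where gP: "g j * of_int_poly P = of_int_poly f * pderiv (g j)"
      and Pb: "\<forall>i. \<bar>real_of_int (coeff P i)\<bar> \<le> real (degree f) * real ((degree f - 1) choose i) * mahler_measure f"
      using gauss_P[OF gmon gdvd f0] by blast
    have PhiP: "Phi f fs r (w j) = map_poly of_int P"
      using Phi_P[OF v_prime Zv fs_fact mon _ _ gP] w01 w_def j by auto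
    define cj where "cj = coeff P i"
    have cjB: "\<bar>real_of_int cj\<bar> \<le> B" using Pb unfolding cj_def B_def Bbound_def by (simp add: mult_ac)
    have "(of_int (v ^ l) :: 'z) dvd (coeff (Phi f fs r (w j)) i - of_int (\<Sum>k\<in>{1..r}. w j k * tt k))"
      unfolding tt_def by (rule Phi_cong[OF v_prime Zv])
    then have "(of_int (v ^ l) :: 'z) dvd of_int (cj - (\<Sum>k\<in>{1..r}. w j k * tt k))"
      unfolding PhiP cj_def by simp
    then have "v ^ l dvd (cj - (\<Sum>k\<in>{1..r}. w j k * tt k))" using Zv_dvd[OF v_prime Zv] by blast
    then obtain q where q: "cj - (\<Sum>k\<in>{1..r}. w j k * tt k) = v ^ l * q" by (rule dvdE)
    have "wv j \<in> zspan {1..s} wv" using j by (intro zspan_gen) auto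
    then have "wv j \<in> zspan {1..rr} bbv" using W_sub unfolding wv_def bbv_def by blast
    then obtain a :: "nat \<Rightarrow> int" where a: "wv j = (\<lambda>k. \<Sum>t\<in>{1..rr}. real_of_int (a t) * bbv t k)"
      unfolding zspan_def by blast
    have wk: "w j k = (\<Sum>t\<in>{1..rr}. a t * bb t k)" if k: "k \<in> {1..r}" for k
    proof -
      have "real_of_int (w j k) = wv j k" using k unfolding wv_def by simp
      also have "\<dots> = (\<Sum>t\<in>{1..rr}. real_of_int (a t) * real_of_int (bb t k))"
        unfolding a bbv_def using k by simp
      finally have "real_of_int (w j k) = real_of_int (\<Sum>t\<in>{1..rr}. a t * bb t k)" by simp
      then show ?thesis by (simp only: of_int_eq_iff)
    qed
    define d where "d = (\<lambda>t. if t \<le> rr then a t else q)"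
    define y where "y = (\<lambda>k. \<Sum>t\<in>{1..rr+1}. real_of_int (d t) * gen t k)"
    have y1: "y k = real_of_int (w j k)" if k: "k \<in> {1..r}" for k
    proof -
      have "y k = (\<Sum>t\<in>{1..rr}. real_of_int (d t) * real_of_int (bb t k))"
        unfolding y_def by (rule GE(1)[OF k])
      also have "\<dots> = (\<Sum>t\<in>{1..rr}. real_of_int (a t) * real_of_int (bb t k))"
        unfolding d_def by (rule sum.cong) auto
      also have "\<dots> = real_of_int (w j k)" using wk[OF k] by simp
      finally show ?thesis .
    qed
    have y2: "y (r + 1) = real_of_int cj / B"
    proof -
      have "y (r + 1) = (\<Sum>k\<in>{1..r}. real_of_int (\<Sum>t\<in>{1..rr}. d t * bb t k) * Tval v l f fs r i (unitv k)) + real_of_int (d (rr+1)) * (real_of_int (v ^ l) / Bbound f i)"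
        unfolding y_def by (rule GE(2))
      also have "(\<Sum>k\<in>{1..r}. real_of_int (\<Sum>t\<in>{1..rr}. d t * bb t k) * Tval v l f fs r i (unitv k))
          = (\<Sum>k\<in>{1..r}. real_of_int (w j k) * (real_of_int (tt k) / B))"
      proof (rule sum.cong)
        fix k assume k: "k \<in> {1..r}"
        have "(\<Sum>t\<in>{1..rr}. d t * bb t k) = (\<Sum>t\<in>{1..rr}. a t * bb t k)"
          unfolding d_def by (rule sum.cong) auto
        then show "real_of_int (\<Sum>t\<in>{1..rr}. d t * bb t k) * Tval v l f fs r i (unitv k) = real_of_int (w j k) * (real_of_int (tt k) / B)"
          using wk[OF k] Tv by simp
      qed simp
      also have "d (rr + 1) = q" unfolding d_def by simp
      also have "(\<Sum>k\<in>{1..r}. real_of_int (w j k) * (real_of_int (tt k) / B)) + real_of_int q * (real_of_int (v ^ l) / Bbound f i)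
          = real_of_int ((\<Sum>k\<in>{1..r}. w j k * tt k) + v ^ l * q) / B"
        unfolding B_def[symmetric] by (simp add: sum_divide_distrib add_divide_distrib mult_ac)
      also have "(\<Sum>k\<in>{1..r}. w j k * tt k) + v ^ l * q = cj" using q by simp
      finally show ?thesis .
    qed
    have y3: "y k = 0" if "k \<notin> {1..r+1}" for k
      unfolding y_def using that by (rule GE(3))
    have "y \<in> zspan {1..rr+1} gen" unfolding zspan_def y_def by blast
    then have yin: "y \<in> zspan {1..rr+1} b" unfolding bbasis .
    then obtain dd :: "nat \<Rightarrow> int" where dd: "y = (\<lambda>k. \<Sum>t\<in>{1..rr+1}. real_of_int (dd t) * b t k)"
      unfolding zspan_def by blast
    have ynorm: "vnorm (r + 1) y \<le> R"
    proof -
      have "ipr (r + 1) y y = (\<Sum>k\<in>insert (r+1) {1..r}. y k * y k)"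
        unfolding ipr_def by (rule sum.cong) auto
      also have "\<dots> = y (r+1) * y (r+1) + (\<Sum>k\<in>{1..r}. y k * y k)" by simp
      also have "\<dots> \<le> 1 + real r"
      proof (rule add_mono)
        have "\<bar>y (r + 1)\<bar> \<le> 1" unfolding y2 using cjB Bpos by (simp add: abs_div divide_le_eq)
        then show "y (r+1) * y (r+1) \<le> 1" by (metis abs_ge_zero abs_mult_self_eq mult_le_one)
        have "(\<Sum>k\<in>{1..r}. y k * y k) \<le> (\<Sum>k\<in>{1..r}. 1)"
        proof (rule sum_mono)
          fix k assume k: "k \<in> {1..r}"
          have "w j k = 0 \<or> w j k = 1" using w01 j k by auto
          then show "y k * y k \<le> 1" using y1[OF k] by auto
        qed
        then show "(\<Sum>k\<in>{1..r}. y k * y k) \<le> real r" by simp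
      qed
      also have "\<dots> \<le> R\<^sup>2" unfolding R_def by (simp add: power2_eq_square algebra_simps)
      finally have "ipr (r + 1) y y \<le> R\<^sup>2" .
      then have "sqrt (ipr (r + 1) y y) \<le> sqrt (R\<^sup>2)" by (rule real_sqrt_le_mono)
      then show ?thesis unfolding vnorm_def R_def by simp
    qed
    have dd0: "\<forall>t\<in>{1..rr+1}. ri < t \<longrightarrow> dd t = 0"
      by (rule short_in_span[OF dd big _ ynorm]) (simp add: R_def)
    have "y = (\<lambda>k. \<Sum>t\<in>{1..ri}. real_of_int (dd t) * b t k)"
    proof
      fix k
      have "y k = (\<Sum>t\<in>{1..rr+1}. real_of_int (dd t) * b t k)" unfolding dd ..
      also have "\<dots> = (\<Sum>t\<in>{1..ri}. real_of_int (dd t) * b t k)"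
        using dd0 ri_le by (intro sum.mono_neutral_right) auto
      finally show "y k = (\<Sum>t\<in>{1..ri}. real_of_int (dd t) * b t k)" .
    qed
    then have "wv j = (\<lambda>k. \<Sum>t\<in>{1..ri}. real_of_int (dd t) * bi t k)"
    proof -
      assume yy: "y = (\<lambda>k. \<Sum>t\<in>{1..ri}. real_of_int (dd t) * b t k)"
      show ?thesis
      proof
        fix k
        show "wv j k = (\<Sum>t\<in>{1..ri}. real_of_int (dd t) * bi t k)"
        proof (cases "k \<in> {1..r}")
          case True
          have "wv j k = y k" using y1[OF True] True unfolding wv_def by simp
          also have "\<dots> = (\<Sum>t\<in>{1..ri}. real_of_int (dd t) * b t k)" using yy by simp
          finally show ?thesis unfolding bi_def using True by simp
        next
          case False
          then show ?thesis unfolding wv_def bi_def by auto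
        qed
      qed
    qed
    then show ?thesis unfolding zspan_def by blast
  qed
  have P1a: "zspan {1..s} wv \<subseteq> zspan {1..ri} bi"
    using w_in by (intro zspan_subset) auto
  have "zspan {1..s} wv \<subseteq> zspan {1..ri} bi \<and> zspan {1..ri} bi \<subseteq> zspan {1..rr} bbv \<and>
     (\<forall>j\<in>{1..ri}. vnorm r (bi j) \<le> (real r + 2) * 2 ^ r) \<and>
     (\<forall>j\<in>{1..ri}. \<forall>e::nat \<Rightarrow> int. (\<forall>k\<in>{1..r}. real_of_int (e k) = bi j k) \<longrightarrow>
               \<bar>Tval v l f fs r i e\<bar> \<le> (real r + 2) * 2 ^ r)"
    using P1a P1b P2 P3 by blast
  then show ?thesis unfolding Let_def ri_def[symmetric] bi_def wv_def bbv_def by simp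
qed


end
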